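(* In the construction described in the context, let $\Omega\subsetneq P_\infty$ be any nonempty open set, $\ell:\Omega\to\mathbb{R}$ bounded continuous with $\inf_\Omega\ell>0$, and $g:\partial\Omega\to\mathbb{R}$ continuous such that $(\ell,g)$ satisfies (CC). Then there is no continuous $u:\overline\Omega\to\mathbb{R}$ with $s[u](x)=\ell(x)$ for all $x\in\Omega$ and $u=g$ on $\partial\Omega$.
   Context: Construction. Let $(e_n)$ be the canonical basis of $\ell^1(\mathbb{N})$; $\alpha(t)=t$ on $[0,\frac12]$, $\alpha(t)=1-t$ on $[\frac12,1]$; $S_n=\{te_1+\alpha(t)e_{n+1}:t\in[0,1]\}$; $x_n=(\frac12-\frac1{2^n})e_1$, $x_\infty=\frac12e_1$; $Y=\bigcup_{n\ge1}(2^{-(n+1)}S_n+x_n)\cup\{x_\infty\}$ with the $\ell^1$ metric $\theta$. $Y$ is the image of an arc-length parametrized injective curve $\gamma:[0,1]\to Y$ with $\gamma(0)=0$, $\gamma(1)=x_\infty$. For $r>0$ let $\theta_r(s,t)=r\,\theta(\gamma(s/r),\gamma(t/r))$ on $[0,r]$. Set $P_1=[0,1]$, $\rho_1=\theta_1$, $L_1=\{1\}$. Given $(P_k,\rho_k)$ with $P_k\subset[0,1]^k$ and $L_k\subset P_k$, let $\pi_k$ denote the $k$-th coordinate, choose a countable dense subset $Q_k=\{q_n:n\in\mathbb{N}\}$ (distinct $q_n$) of $P_k\setminus L_k$ with $\pi_k$ injective on $Q_k$ and $0\notin\pi_k(Q_k)$, set $r_n=2^{-(n+k)}$, $d_n=\theta_{r_n}$,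 and let $P_{k+1}=\{(x,0):x\in P_k\setminus Q_k\}\cup\{(q_n,y):n\in\mathbb{N},y\in[0,r_n]\}\subset[0,1]^{k+1}$ with metric $\rho_{k+1}((x_1,y_1),(x_2,y_2))$ equal to $d_n(y_1,y_2)$ if $x_1=x_2=q_n$; $d_n(y_1,0)+\rho_k(x_1,x_2)+d_m(0,y_2)$ if $x_1=q_n,x_2=q_m$, $n\ne m$; $d_n(y_1,0)+\rho_k(x_1,x_2)$ if $x_1=q_n$, $x_2\notin Q_k$ (and symmetrically); $\rho_k(x_1,x_2)$ if $x_1,x_2\notin Q_k$. Let $L_{k+1}=(L_k\times\{0\})\cup\{(q_n,r_n):n\in\mathbb{N}\}$. Let $i_k:P_k\to[0,1]^{\mathbb{N}}$, $i_k(x)=(x_1,\dots,x_k,0,0,\dots)$; $\mathcal P_\infty=\bigcup_k i_k(P_k)$ with the metric $\rho_\infty(x,y)=\rho_k(i_k^{-1}x,i_k^{-1}y)$ for $x,y\in i_k(P_k)$; $(P_\infty,\rho_\infty)$ is the completion of $(\mathcal P_\infty,\rho_\infty)$. Local slope: $s[u](\bar x):=\limsup_{x\to\bar x}\frac{\max\{u(\bar x)-u(x),0\}}{\rho_\infty(\bar x,x)}$ (zero if $\bar x$ isolated), computed in $\overline\Omega$. $(\ell,g)$ satisfies (CC) if for all $x,y\in\partial\Omega$, $g(x)-g(y)\le\inf\{\int_0^T\ell(\eta(t))dt\}$ over $1$-Lipschitz $\eta:[0,T]\to\overline\Omega$ with $\eta(0)=y$, $\eta(T)=x$, $\eta((0,T))\subset\Omega$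 ($\inf\emptyset=+\infty$). *)

theory Defs
  imports "HOL-Analysis.Analysis"
begin

text \<open>Points of l^1(N) are represented as functions nat => real; index i stands for
  the basis vector e_i (index 0 is unused and always 0). All points used are finitely
  supported, so the l^1 sum converges.\<close>

definition ebasis :: "nat \<Rightarrow> (nat \<Rightarrow> real)" where
  "ebasis i = (\<lambda>j. if j = i then 1 else 0)"

definition l1dist :: "(nat \<Rightarrow> real) \<Rightarrow> (nat \<Rightarrow> real) \<Rightarrow> real" where
  "l1dist a b = (\<Sum>i. \<bar>a i - b i\<bar>)"

definition alpha :: "real \<Rightarrow> real" where
  "alpha t = (if t \<le> 1/2 then t else 1 - t)"

definition Sseg :: "nat \<Rightarrow> (nat \<Rightarrow> real) set" where
  "Sseg n = {(\<lambda>i. t * ebasis 1 i + alpha t * ebasis (n+1) i) | t. t \<in> {0..1}}"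

definition xpt :: "nat \<Rightarrow> (nat \<Rightarrow> real)" where
  "xpt n = (\<lambda>i. (1/2 - 1/2^n) * ebasis 1 i)"

definition xinf :: "nat \<Rightarrow> real" where
  "xinf = (\<lambda>i. (1/2) * ebasis 1 i)"

definition Ycurve :: "(nat \<Rightarrow> real) set" where
  "Ycurve = (\<Union>n\<in>{1..}. (\<lambda>p. (\<lambda>i. (1/2)^(n+1) * p i + xpt n i)) ` Sseg n) \<union> {xinf}"

text \<open>The arc-length parametrisation gamma : [0,1] -> Y with gamma 0 = 0, gamma 1 = xinf,
  written explicitly: the n-th scaled segment (of length 2^-n) is traversed on the
  parameter interval [1 - 2/2^n, 1 - 1/2^n].\<close>

definition gamma :: "real \<Rightarrow> (nat \<Rightarrow> real)" where
  "gamma s = (if s \<ge> 1 then xinf else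
     (let n = (LEAST n::nat. s < 1 - 1/2^n);
          t = 2^n * (s - (1 - 2/2^n))
      in (\<lambda>i. xpt n i + (1/2)^(n+1) * (t * ebasis 1 i + alpha t * ebasis (n+1) i))))"

definition theta_r :: "real \<Rightarrow> real \<Rightarrow> real \<Rightarrow> real" where
  "theta_r r s t = r * l1dist (gamma (s / r)) (gamma (t / r))"

text \<open>Points of [0,1]^k are represented via the embedding i_k as functions nat => real,
  with coordinate number j (1-based) stored at index j-1, and all indices >= k equal to 0.
  q k n (n >= 1) is the n-th point of the chosen dense set Q_k.\<close>

definition rad :: "nat \<Rightarrow> nat \<Rightarrow> real" where
  "rad k n = (1/2)^(n+k)"

definition construction ::
  "(nat \<Rightarrow> (nat \<Rightarrow> real) set) \<Rightarrow> (nat \<Rightarrow> (nat \<Rightarrow> real) \<Rightarrow> (nat \<Rightarrow> real) \<Rightarrow> real)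
   \<Rightarrow> (nat \<Rightarrow> (nat \<Rightarrow> real) set) \<Rightarrow> (nat \<Rightarrow> nat \<Rightarrow> (nat \<Rightarrow> real)) \<Rightarrow> bool" where
  "construction P \<rho> L q \<longleftrightarrow>
     P 1 = {p. p 0 \<in> {0..1} \<and> (\<forall>i\<ge>1. p i = 0)} \<and>
     (\<forall>x\<in>P 1. \<forall>y\<in>P 1. \<rho> 1 x y = theta_r 1 (x 0) (y 0)) \<and>
     L 1 = {(\<lambda>i. if i = 0 then 1 else 0)} \<and>
     (\<forall>k\<ge>1.
        inj_on (q k) {1::nat..} \<and>
        q k ` {1::nat..} \<subseteq> P k - L k \<and>
        (\<forall>x\<in>P k - L k. \<forall>\<epsilon>>0. \<exists>n\<ge>1. \<rho> k x (q k n) < \<epsilon>) \<and>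
        inj_on (\<lambda>p. p (k - 1)) (q k ` {1::nat..}) \<and>
        (\<forall>n\<ge>1. q k n (k - 1) \<noteq> 0) \<and>
        P (Suc k) = (P k - q k ` {1::nat..}) \<union>
                    {(q k n)(k := y) | n y. n \<ge> 1 \<and> y \<in> {0..rad k n}} \<and>
        (\<forall>n\<ge>1. \<forall>m\<ge>1. \<forall>y1\<in>{0..rad k n}. \<forall>y2\<in>{0..rad k m}.
            \<rho> (Suc k) ((q k n)(k := y1)) ((q k m)(k := y2)) =
              (if n = m then theta_r (rad k n) y1 y2
               else theta_r (rad k n) y1 0 + \<rho> k (q k n) (q k m) + theta_r (rad k m) 0 y2)) \<and>
        (\<forall>n\<ge>1. \<forall>y1\<in>{0..rad k n}. \<forall>x\<in>P k - q k ` {1::nat..}.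
            \<rho> (Suc k) ((q k n)(k := y1)) x = theta_r (rad k n) y1 0 + \<rho> k (q k n) x \<and>
            \<rho> (Suc k) x ((q k n)(k := y1)) = \<rho> k x (q k n) + theta_r (rad k n) 0 y1) \<and>
        (\<forall>x1\<in>P k - q k ` {1::nat..}. \<forall>x2\<in>P k - q k ` {1::nat..}.
            \<rho> (Suc k) x1 x2 = \<rho> k x1 x2) \<and>
        L (Suc k) = L k \<union> {(q k n)(k := rad k n) | n. n \<ge> 1})"

definition local_slope :: "'a::metric_space set \<Rightarrow> ('a \<Rightarrow> real) \<Rightarrow> 'a \<Rightarrow> ereal" where
  "local_slope S u xb =
     (if at xb within S = bot then 0
      else Limsup (at xb within S) (\<lambda>x. ereal (max (u xb - u x) 0 / dist xb x)))"

definition compat_CC :: "'a::metric_space set \<Rightarrow> ('a \<Rightarrow> real) \<Rightarrow> ('a \<Rightarrow> real) \<Rightarrow> bool" where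
  "compat_CC \<Omega> l g \<longleftrightarrow>
     (\<forall>x\<in>frontier \<Omega>. \<forall>y\<in>frontier \<Omega>.
        ereal (g x - g y) \<le>
          Inf {ereal (integral {0..T} (\<lambda>t. l (\<eta> t))) | (T::real) (\<eta>::real \<Rightarrow> 'a).
                 T \<ge> 0 \<and> 1-lipschitz_on {0..T} \<eta> \<and> \<eta> ` {0..T} \<subseteq> closure \<Omega> \<and>
                 \<eta> 0 = y \<and> \<eta> T = x \<and> \<eta> ` {0<..<T} \<subseteq> \<Omega>})"

end

theory Submission
  imports Defs "HOL-Analysis.Analysis"
begin


lemma ekeland_weak:
  fixes F :: "'a::complete_space set" and \<phi> :: "'a \<Rightarrow> real"
  assumes clF: "closed F" and x0: "x0 \<in> F" and cont: "continuous_on F \<phi>"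
    and lb: "\<And>x. x \<in> F \<Longrightarrow> \<phi> x \<ge> m" and lam: "L > 0"
  shows "\<exists>w\<in>F. \<phi> w + L * dist x0 w \<le> \<phi> x0 \<and> (\<forall>x\<in>F. \<phi> w \<le> \<phi> x + L * dist w x)"
proof -
  define S where "S x = {y\<in>F. \<phi> y + L * dist x y \<le> \<phi> x}" for x
  have selfS: "x \<in> S x" if "x \<in> F" for x using that by (simp add: S_def)
  have transS: "z \<in> S x" if "y \<in> S x" "z \<in> S y" for x y z
  proof -
    have "dist x z \<le> dist x y + dist y z" by (rule dist_triangle)
    hence "L * dist x z \<le> L * dist x y + L * dist y z" using lam
      by (metis distrib_left mult_left_mono order_less_imp_le)
    thus ?thesis using that by (auto simp: S_def)
  qed
  have SF: "S x \<subseteq> F" for x by (auto simp: S_def)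
  have bdd: "bdd_below (\<phi> ` S x)" for x using lb SF by (meson bdd_belowI2 subsetD)
  have closedS: "closed (S x)" for x
  proof -
    have "continuous_on F (\<lambda>y. \<phi> y + L * dist x y - \<phi> x)"
      by (intro continuous_intros cont)
    hence "closed (F \<inter> (\<lambda>y. \<phi> y + L * dist x y - \<phi> x) -` {..0})"
      by (intro continuous_closed_preimage clF) auto
    moreover have "F \<inter> (\<lambda>y. \<phi> y + L * dist x y - \<phi> x) -` {..0} = S x"
      by (auto simp: S_def)
    ultimately show ?thesis by simp
  qed
  define nxt where "nxt n x = (SOME y. y \<in> S x \<and> \<phi> y \<le> (INF z\<in>S x. \<phi> z) + 1 / real (Suc n))" for n x
  have nxt: "nxt n x \<in> S x \<and> \<phi> (nxt n x) \<le> (INF z\<in>S x. \<phi> z) + 1 / real (Suc n)" if "x \<in> F" for n x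
  proof -
    have ne: "S x \<noteq> {}" using selfS[OF that] by auto
    have "(INF z\<in>S x. \<phi> z) < (INF z\<in>S x. \<phi> z) + 1 / real (Suc n)" by simp
    then obtain y where "y \<in> S x" "\<phi> y < (INF z\<in>S x. \<phi> z) + 1 / real (Suc n)"
      using cINF_less_iff[OF ne bdd] by blast
    hence "\<exists>y. y \<in> S x \<and> \<phi> y \<le> (INF z\<in>S x. \<phi> z) + 1 / real (Suc n)" by auto
    thus ?thesis unfolding nxt_def by (rule someI_ex)
  qed
  define f where "f = rec_nat x0 nxt"
  have f0: "f 0 = x0" and fS: "f (Suc n) = nxt n (f n)" for n by (simp_all add: f_def)
  have fF: "f n \<in> F" for n
    by (induction n) (use x0 nxt SF in \<open>auto simp: f0 fS\<close>)
  have fstep: "f (Suc n) \<in> S (f n)" for n using nxt[OF fF] fS by auto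
  have fmono: "f m \<in> S (f n)" if "n \<le> m" for n m
    using that
  proof (induction m)
    case 0 thus ?case using selfS fF by auto
  next
    case (Suc m)
    show ?case
    proof (cases "n = Suc m")
      case True thus ?thesis using selfS fF by auto
    next
      case False
      hence "n \<le> m" using Suc.prems by auto
      thus ?thesis using Suc.IH transS fstep by blast
    qed
  qed
  have phidec: "\<phi> (f m) + L * dist (f n) (f m) \<le> \<phi> (f n)" if "n \<le> m" for n m
    using fmono[OF that] by (simp add: S_def)
  have dec: "decseq (\<lambda>n. \<phi> (f n))"
    unfolding decseq_def
  proof (intro allI impI)
    fix a b :: nat assume "a \<le> b"
    have "L * dist (f a) (f b) \<ge> 0" using lam by simp
    thus "\<phi> (f b) \<le> \<phi> (f a)" using phidec[OF \<open>a \<le> b\<close>] by linarith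
  qed
  have "convergent (\<lambda>n. \<phi> (f n))"
  proof (rule Bseq_monoseq_convergent[rotated])
    show "monoseq (\<lambda>n. \<phi> (f n))" using dec by (simp add: monoseq_iff)
    show "Bseq (\<lambda>n. \<phi> (f n))"
    proof (rule BseqI'[where K = "max \<bar>\<phi> x0\<bar> \<bar>m\<bar>"])
      fix n
      have "\<phi> (f n) \<le> \<phi> x0" using dec f0 by (metis decseqD zero_le)
      moreover have "m \<le> \<phi> (f n)" using lb fF by auto
      ultimately show "norm (\<phi> (f n)) \<le> max \<bar>\<phi> x0\<bar> \<bar>m\<bar>" by auto
    qed
  qed
  hence Cphi: "Cauchy (\<lambda>n. \<phi> (f n))" by (simp add: convergent_Cauchy)
  have "Cauchy f"
  proof (rule metric_CauchyI)
    fix e :: real assume e: "e > 0"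
    obtain M where M: "\<forall>m\<ge>M. \<forall>n\<ge>M. dist (\<phi> (f m)) (\<phi> (f n)) < L * e"
      using metric_CauchyD[OF Cphi] e lam by (meson mult_pos_pos)
    have "dist (f m) (f n) < e" if "m \<ge> M" "n \<ge> M" for m n
    proof -
      have *: "L * dist (f a) (f b) < L * e" if "a \<le> b" "a \<ge> M" "b \<ge> M" for a b
      proof -
        have "L * dist (f a) (f b) \<le> \<phi> (f a) - \<phi> (f b)" using phidec[OF that(1)] by simp
        also have "\<dots> \<le> dist (\<phi> (f b)) (\<phi> (f a))" by (simp add: dist_real_def)
        also have "\<dots> < L * e" using M that by auto
        finally show ?thesis .
      qed
      show ?thesis
      proof (cases "m \<le> n")
        case True thus ?thesis using *[OF True that] lam by simp
      next
        case False thus ?thesis using *[of n m] that lam by (simp add: dist_commute)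
      qed
    qed
    thus "\<exists>M. \<forall>m\<ge>M. \<forall>n\<ge>M. dist (f m) (f n) < e" by blast
  qed
  then obtain w where fw: "f \<longlonglongrightarrow> w" using complete_UNIV convergent_def Cauchy_convergent_iff by blast
  have wF: "w \<in> F" using closed_sequentially[OF clF] fF fw by blast
  have wS: "w \<in> S (f n)" for n
  proof -
    have "(\<lambda>i. f (i + n)) \<longlonglongrightarrow> w" using LIMSEQ_ignore_initial_segment[OF fw] .
    moreover have "\<forall>i. f (i + n) \<in> S (f n)" using fmono by simp
    ultimately show ?thesis using closed_sequentially[OF closedS, of "\<lambda>i. f (i + n)" "f n" w] by blast
  qed
  have "\<phi> w \<le> \<phi> x + L * dist w x" if xF: "x \<in> F" for x
  proof (rule ccontr)
    assume nt: "\<not> \<phi> w \<le> \<phi> x + L * dist w x"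
    hence xS: "x \<in> S w" using xF by (auto simp: S_def)
    have "\<phi> w \<le> \<phi> x + 1 / real (Suc n)" for n
    proof -
      have xn: "x \<in> S (f n)" using transS[OF wS xS] .
      have "\<phi> (f (Suc n)) \<le> (INF z\<in>S (f n). \<phi> z) + 1 / real (Suc n)" using nxt[OF fF] fS by auto
      also have "(INF z\<in>S (f n). \<phi> z) \<le> \<phi> x" using cINF_lower[OF bdd xn] .
      finally have a: "\<phi> (f (Suc n)) \<le> \<phi> x + 1 / real (Suc n)" by simp
      have "L * dist (f (Suc n)) w \<ge> 0" using lam by simp
      hence "\<phi> w \<le> \<phi> (f (Suc n))" using wS[of "Suc n"] by (simp add: S_def)
      thus ?thesis using a by simp
    qed
    hence "\<phi> w \<le> \<phi> x"
    proof -
      assume h: "\<And>n. \<phi> w \<le> \<phi> x + 1 / real (Suc n)"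
      show ?thesis
      proof (rule ccontr)
        assume "\<not> \<phi> w \<le> \<phi> x"
        then obtain n where "inverse (real (Suc n)) < \<phi> w - \<phi> x"
          using reals_Archimedean[of "\<phi> w - \<phi> x"] by auto
        thus False using h[of n] by (simp add: inverse_eq_divide)
      qed
    qed
    moreover have "\<phi> x + L * dist w x \<le> \<phi> w" using xS by (simp add: S_def)
    moreover have "L * dist w x \<ge> 0" using lam by simp
    ultimately have "L * dist w x \<le> 0" by linarith
    hence "dist w x \<le> 0" using lam by (simp add: mult_le_0_iff)
    hence "x = w" by simp
    thus False using nt lam by simp
  qed
  moreover have "\<phi> w + L * dist x0 w \<le> \<phi> x0" using wS[of 0] f0 by (simp add: S_def)
  ultimately show ?thesis using wF by blast
qed


lemma l1dist_fin:
  assumes "finite N" "\<And>i. i \<notin> N \<Longrightarrow> a i = b i"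
  shows "l1dist a b = (\<Sum>i\<in>N. \<bar>a i - b i\<bar>)"
  unfolding l1dist_def using assms by (intro suminf_finite) auto

lemma l1dist_comm: "l1dist a b = l1dist b a"
  unfolding l1dist_def by (simp add: abs_minus_commute)

lemma l1dist_two:
  assumes "i \<noteq> 1" "j \<noteq> 1"
  shows "l1dist (\<lambda>k. x * ebasis 1 k + a * ebasis i k) (\<lambda>k. y * ebasis 1 k + b * ebasis j k)
       = \<bar>x - y\<bar> + (if i = j then \<bar>a - b\<bar> else \<bar>a\<bar> + \<bar>b\<bar>)"
proof -
  have "l1dist (\<lambda>k. x * ebasis 1 k + a * ebasis i k) (\<lambda>k. y * ebasis 1 k + b * ebasis j k)
      = (\<Sum>k\<in>{1,i,j}. \<bar>(x * ebasis 1 k + a * ebasis i k) - (y * ebasis 1 k + b * ebasis j k)\<bar>)"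
    by (rule l1dist_fin) (auto simp: ebasis_def)
  also have "\<dots> = \<bar>x - y\<bar> + (if i = j then \<bar>a - b\<bar> else \<bar>a\<bar> + \<bar>b\<bar>)"
    using assms by (cases "i = j") (auto simp: ebasis_def)
  finally show ?thesis .
qed

definition seg :: "real \<Rightarrow> nat" where "seg s = (LEAST n::nat. s < 1 - 1/2^n)"

lemma seg_props:
  assumes "0 \<le> s" "s < 1"
  shows "seg s \<ge> 1" "1 - 2/2^(seg s) \<le> s" "s < 1 - 1/2^(seg s)"
proof -
  have ex: "\<exists>n::nat. s < 1 - 1/2^n"
  proof -
    obtain n :: nat where "(1/2::real)^n < 1 - s" using assms real_arch_pow_inv[of "1 - s" "1/2"] by auto
    hence "s < 1 - 1/2^n" by (simp add: power_divide)
    thus ?thesis by blast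
  qed
  show s3: "s < 1 - 1/2^(seg s)" unfolding seg_def by (rule LeastI_ex[OF ex])
  show s1: "seg s \<ge> 1"
  proof (rule ccontr)
    assume "\<not> 1 \<le> seg s" hence "seg s = 0" by simp
    thus False using s3 assms by simp
  qed
  then obtain M where M: "seg s = Suc M" by (cases "seg s") auto
  have "M < (LEAST n::nat. s < 1 - 1/2^n)" using M by (simp add: seg_def)
  hence "\<not> s < 1 - 1/2^M" by (rule not_less_Least)
  thus "1 - 2/2^(seg s) \<le> s" using M by simp
qed

lemma seg_eq:
  assumes "N \<ge> 1" "1 - 2/2^N \<le> s" "s < 1 - 1/2^N"
  shows "seg s = N"
  unfolding seg_def
proof (rule Least_equality)
  show "s < 1 - 1/2^N" by fact
  fix m :: nat assume m: "s < 1 - 1/2^m"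
  show "N \<le> m"
  proof (rule ccontr)
    assume "\<not> N \<le> m"
    then obtain M where M: "N = Suc M" "m \<le> M" using assms(1) by (cases N) auto
    have "(2::real)^m \<le> 2^M" using M by (intro power_increasing) auto
    hence "1/2^M \<le> (1::real)/2^m" by (intro divide_left_mono) auto
    hence "2/2^N \<le> (1::real)/2^m" using M by simp
    thus False using m assms(2) by linarith
  qed
qed

lemma seg_mono:
  assumes "0 \<le> t" "t \<le> s" "s < 1"
  shows "seg t \<le> seg s"
  unfolding seg_def
  by (rule Least_le) (use seg_props(3)[of s] assms in \<open>auto simp: seg_def\<close>)

definition bumpv :: "real \<Rightarrow> real" where
  "bumpv s = (if s \<ge> 1 then 0 else (1/2)^(seg s + 1) * alpha (2^seg s * (s - (1 - 2/2^seg s))))"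

definition sidx :: "real \<Rightarrow> nat" where
  "sidx s = (if s < 1 then seg s + 1 else 2)"

lemma gamma_repr:
  assumes "0 \<le> s" "s \<le> 1"
  shows "gamma s = (\<lambda>k. (s/2) * ebasis 1 k + bumpv s * ebasis (sidx s) k)"
proof (cases "s < 1")
  case True
  have N: "seg s \<ge> 1" using seg_props[OF assms(1) True] by simp
  have pw: "(1/2::real)^(seg s + 1) * 2^seg s = 1/2"
    by (simp add: power_divide field_simps)
  show ?thesis
  proof
    fix k
    have "gamma s k = xpt (seg s) k + (1/2)^(seg s+1) * ((2^seg s * (s - (1 - 2/2^seg s))) * ebasis 1 k
          + alpha (2^seg s * (s - (1 - 2/2^seg s))) * ebasis (seg s + 1) k)"
      using True by (simp add: gamma_def seg_def Let_def)
    also have "\<dots> = (s/2) * ebasis 1 k + bumpv s * ebasis (sidx s) k"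
      using True N pw
      by (cases "k = 1"; cases "k = seg s + 1")
         (auto simp: xpt_def ebasis_def bumpv_def sidx_def field_simps)
    finally show "gamma s k = (s/2) * ebasis 1 k + bumpv s * ebasis (sidx s) k" .
  qed
next
  case False
  hence "s = 1" using assms by simp
  thus ?thesis by (auto simp: gamma_def xinf_def bumpv_def ebasis_def)
qed

lemma alpha_le: "0 \<le> t \<Longrightarrow> t \<le> 1 \<Longrightarrow> alpha t \<le> t \<and> alpha t \<le> 1 - t \<and> alpha t \<ge> 0"
  by (auto simp: alpha_def)

lemma alpha_lip: "\<bar>alpha x - alpha y\<bar> \<le> \<bar>x - y\<bar>"
  by (auto simp: alpha_def)

lemma sidx_ne1: "0 \<le> s \<Longrightarrow> sidx s \<noteq> 1"
  using seg_props(1)[of s] by (auto simp: sidx_def)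

lemma gamma_dist:
  assumes "0 \<le> s" "s \<le> 1" "0 \<le> t" "t \<le> 1"
  shows "l1dist (gamma s) (gamma t) = \<bar>s - t\<bar>/2 +
     (if sidx s = sidx t then \<bar>bumpv s - bumpv t\<bar> else \<bar>bumpv s\<bar> + \<bar>bumpv t\<bar>)"
proof -
  have "l1dist (gamma s) (gamma t) = l1dist (\<lambda>k. (s/2) * ebasis 1 k + bumpv s * ebasis (sidx s) k)
     (\<lambda>k. (t/2) * ebasis 1 k + bumpv t * ebasis (sidx t) k)" using assms by (simp add: gamma_repr)
  also have "\<dots> = \<bar>s/2 - t/2\<bar> + (if sidx s = sidx t then \<bar>bumpv s - bumpv t\<bar> else \<bar>bumpv s\<bar> + \<bar>bumpv t\<bar>)"
    by (rule l1dist_two) (use sidx_ne1 assms in auto)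
  moreover have "\<bar>s/2 - t/2\<bar> = \<bar>s - t\<bar>/2" by (cases "s \<le> t") auto
  ultimately show ?thesis by simp
qed


definition tau :: "real \<Rightarrow> real" where "tau s = 2^seg s * (s - (1 - 2/2^seg s))"

lemma tau_range:
  assumes "0 \<le> s" "s < 1"
  shows "0 \<le> tau s" "tau s < 1"
proof -
  define N where "N = seg s"
  have p: "1 - 2/2^N \<le> s" "s < 1 - 1/2^N" using seg_props[OF assms] by (simp_all add: N_def)
  show "0 \<le> tau s" using p(1) by (simp add: tau_def N_def[symmetric])
  have "2^N * (s - (1 - 2/2^N)) < 2^N * ((1::real)/2^N)" using p(2) by (intro mult_strict_left_mono) auto
  thus "tau s < 1" by (simp add: tau_def N_def[symmetric])
qed

lemma bumpv_lt1: "s < 1 \<Longrightarrow> bumpv s = (1/2)^(seg s + 1) * alpha (tau s)"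
  by (simp add: bumpv_def tau_def)

lemma tau_lin: "(1/2::real)^(seg s + 1) * tau s = (s - (1 - 2/2^seg s))/2"
  unfolding tau_def by (simp add: power_divide field_simps)

lemma bumpv_nonneg: "0 \<le> s \<Longrightarrow> 0 \<le> bumpv s"
proof (cases "s < 1")
  case True
  assume s0: "0 \<le> s"
  have "0 \<le> alpha (tau s)" using alpha_le[of "tau s"] tau_range[OF s0 True] by simp
  thus ?thesis using True by (simp add: bumpv_lt1)
qed (simp add: bumpv_def)

lemma bumpv_bounds:
  assumes "0 \<le> s" "s < 1"
  shows "bumpv s \<le> (s - (1 - 2/2^seg s))/2" "bumpv s \<le> ((1 - 1/2^seg s) - s)/2"
proof -
  note tr = tau_range[OF assms]
  have "bumpv s = (1/2)^(seg s + 1) * alpha (tau s)" using assms by (simp add: bumpv_lt1)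
  also have "\<dots> \<le> (1/2)^(seg s + 1) * tau s"
    using alpha_le[of "tau s"] tr by (intro mult_left_mono) auto
  also have "\<dots> = (s - (1 - 2/2^seg s))/2" by (rule tau_lin)
  finally show "bumpv s \<le> (s - (1 - 2/2^seg s))/2" .
  have "bumpv s = (1/2)^(seg s + 1) * alpha (tau s)" using assms by (simp add: bumpv_lt1)
  also have "\<dots> \<le> (1/2)^(seg s + 1) * (1 - tau s)"
    using alpha_le[of "tau s"] tr by (intro mult_left_mono) auto
  also have "\<dots> = (1/2)^(seg s + 1) - (s - (1 - 2/2^seg s))/2"
    using tau_lin[of s] by (simp add: right_diff_distrib)
  also have "\<dots> = ((1 - 1/2^seg s) - s)/2" by (simp add: power_divide field_simps)
  finally show "bumpv s \<le> ((1 - 1/2^seg s) - s)/2" .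
qed

lemma bumpv_same:
  assumes "0 \<le> s" "s < 1" "0 \<le> t" "t < 1" "seg s = seg t"
  shows "\<bar>bumpv s - bumpv t\<bar> \<le> \<bar>s - t\<bar>/2"
proof -
  have e: "bumpv s - bumpv t = (1/2)^(seg s + 1) * (alpha (tau s) - alpha (tau t))"
    using assms by (simp only: bumpv_lt1 right_diff_distrib)
  have "\<bar>bumpv s - bumpv t\<bar> = \<bar>(1/2::real)^(seg s + 1)\<bar> * \<bar>alpha (tau s) - alpha (tau t)\<bar>"
    by (simp only: e abs_mult)
  hence "\<bar>bumpv s - bumpv t\<bar> = (1/2)^(seg s + 1) * \<bar>alpha (tau s) - alpha (tau t)\<bar>"
    by simp
  also have "\<dots> \<le> (1/2)^(seg s + 1) * \<bar>tau s - tau t\<bar>"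
    by (intro mult_left_mono alpha_lip) auto
  also have "\<dots> = \<bar>(1/2)^(seg s + 1) * tau s - (1/2)^(seg t + 1) * tau t\<bar>"
  proof -
    have "(1/2::real)^(seg s + 1) * \<bar>tau s - tau t\<bar> = \<bar>(1/2::real)^(seg s + 1)\<bar> * \<bar>tau s - tau t\<bar>" by simp
    also have "\<dots> = \<bar>(1/2)^(seg s + 1) * (tau s - tau t)\<bar>" by (simp only: abs_mult)
    also have "\<dots> = \<bar>(1/2)^(seg s + 1) * tau s - (1/2)^(seg t + 1) * tau t\<bar>"
      using assms(5) by (simp only: right_diff_distrib)
    finally show ?thesis .
  qed
  also have "\<dots> = \<bar>s - t\<bar>/2"
  proof -
    have l: "(1/2::real)^(seg s + 1) * tau s - (1/2)^(seg t + 1) * tau t = (s - t)/2"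
      using tau_lin[of s] tau_lin[of t] unfolding assms(5) by argo
    show ?thesis by (simp only: l) simp
  qed
  finally show ?thesis .
qed

definition Bd :: "real \<Rightarrow> real \<Rightarrow> real" where
  "Bd s t = (if sidx s = sidx t then \<bar>bumpv s - bumpv t\<bar> else bumpv s + bumpv t)"

lemma Bd_sym: "Bd s t = Bd t s"
  by (auto simp: Bd_def abs_minus_commute)

lemma Bd_nonneg: "0 \<le> s \<Longrightarrow> 0 \<le> t \<Longrightarrow> 0 \<le> Bd s t"
  using bumpv_nonneg[of s] bumpv_nonneg[of t] by (auto simp: Bd_def)

lemma Bd_tri: "0 \<le> s \<Longrightarrow> 0 \<le> t \<Longrightarrow> 0 \<le> a \<Longrightarrow> Bd s a \<le> Bd s t + Bd t a"
  using bumpv_nonneg[of s] bumpv_nonneg[of t] bumpv_nonneg[of a] by (auto simp: Bd_def)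

lemma seg_sep:
  assumes "a < b"
  shows "1 - 1/2^a \<le> 1 - (2::real)/2^b"
proof -
  have "(2::real)^(Suc a) \<le> 2^b" using assms by (intro power_increasing) auto
  hence "2/2^b \<le> (2::real)/2^(Suc a)" by (intro divide_left_mono) auto
  thus ?thesis by simp
qed

lemma Bd_le:
  assumes "0 \<le> t" "t \<le> s" "s \<le> 1"
  shows "Bd s t \<le> (s - t)/2"
proof (cases "s < 1")
  case True
  have t1: "t < 1" using True assms by simp
  show ?thesis
  proof (cases "seg s = seg t")
    case True
    thus ?thesis using bumpv_same[of s t] \<open>s < 1\<close> t1 assms by (auto simp: Bd_def sidx_def)
  next
    case False
    hence lt: "seg t < seg s" using seg_mono[of t s] assms \<open>s < 1\<close> by simp
    have "Bd s t = bumpv s + bumpv t" using False \<open>s < 1\<close> t1 by (simp add: Bd_def sidx_def)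
    also have "\<dots> \<le> (s - (1 - 2/2^seg s))/2 + ((1 - 1/2^seg t) - t)/2"
      using bumpv_bounds(1)[of s] bumpv_bounds(2)[of t] assms \<open>s < 1\<close> t1 by argo
    also have "\<dots> \<le> (s - t)/2" using seg_sep[OF lt] by argo
    finally show ?thesis .
  qed
next
  case False
  hence s1: "s = 1" using assms by simp
  show ?thesis
  proof (cases "t < 1")
    case True
    have "Bd s t = bumpv t" using s1 bumpv_nonneg[of t] assms by (auto simp: Bd_def bumpv_def)
    also have "\<dots> \<le> ((1 - 1/2^seg t) - t)/2" using bumpv_bounds(2)[of t] assms True by simp
    also have "\<dots> \<le> (s - t)/2" using s1 by simp
    finally show ?thesis .
  next
    case False
    hence "t = 1" using assms by simp
    thus ?thesis using s1 assms by (simp add: Bd_def)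
  qed
qed

lemma gdist: "0 \<le> s \<Longrightarrow> s \<le> 1 \<Longrightarrow> 0 \<le> t \<Longrightarrow> t \<le> 1 \<Longrightarrow>
   l1dist (gamma s) (gamma t) = \<bar>s - t\<bar>/2 + Bd s t"
  using gamma_dist[of s t] bumpv_nonneg[of s] bumpv_nonneg[of t] by (simp add: Bd_def)

lemma gdist_le:
  assumes "0 \<le> s" "s \<le> 1" "0 \<le> t" "t \<le> 1"
  shows "l1dist (gamma s) (gamma t) \<le> \<bar>s - t\<bar>" "\<bar>s - t\<bar>/2 \<le> l1dist (gamma s) (gamma t)"
proof -
  have "Bd s t \<le> \<bar>s - t\<bar>/2"
  proof (cases "t \<le> s")
    case True thus ?thesis using Bd_le[of t s] assms by simp
  next
    case False thus ?thesis using Bd_le[of s t] assms Bd_sym[of s t] by simp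
  qed
  thus "l1dist (gamma s) (gamma t) \<le> \<bar>s - t\<bar>" using gdist assms by simp
  show "\<bar>s - t\<bar>/2 \<le> l1dist (gamma s) (gamma t)" using gdist assms Bd_nonneg[of s t] by simp
qed

lemma gdist_mono:
  assumes "0 \<le> t" "t \<le> a" "a \<le> s" "s \<le> 1"
  shows "l1dist (gamma s) (gamma a) \<le> l1dist (gamma s) (gamma t)"
proof -
  have "Bd s a \<le> Bd s t + Bd t a" using Bd_tri assms by simp
  moreover have "Bd t a \<le> (a - t)/2" using Bd_le[of t a] Bd_sym[of t a] assms by simp
  moreover have "l1dist (gamma s) (gamma a) = (s - a)/2 + Bd s a" using gdist[of s a] assms by simp
  moreover have "l1dist (gamma s) (gamma t) = (s - t)/2 + Bd s t" using gdist[of s t] assms by simp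
  ultimately show ?thesis by argo
qed

definition stp :: "nat \<Rightarrow> real" where "stp N = 1 - 2/2^N"
definition mdp :: "nat \<Rightarrow> real" where "mdp N = 1 - 2/2^N + 1/2^(N+1)"

lemma stp_facts: "N \<ge> 1 \<Longrightarrow> 0 \<le> stp N \<and> stp N < 1 \<and> seg (stp N) = N \<and> bumpv (stp N) = 0"
proof -
  assume N: "N \<ge> 1"
  have "(2::real)/2^N \<le> 1" using N
  proof -
    have "(2::real)^1 \<le> 2^N" using N by (intro power_increasing) auto
    thus ?thesis by simp
  qed
  moreover have "1/2^N < (2::real)/2^N" by (intro divide_strict_right_mono) auto
  hence s: "seg (stp N) = N" using N by (intro seg_eq) (auto simp: stp_def)
  moreover have "stp N < 1" by (simp add: stp_def)
  ultimately show ?thesis by (auto simp: stp_def bumpv_def alpha_def)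
qed


lemma pow_ge2: "N \<ge> 1 \<Longrightarrow> (2::real) \<le> 2^N"
proof -
  assume "N \<ge> 1"
  hence "(2::real)^1 \<le> 2^N" by (intro power_increasing) auto
  thus ?thesis by simp
qed

lemma mdp_facts:
  assumes N: "N \<ge> 1"
  shows "0 \<le> mdp N" "mdp N < 1" "seg (mdp N) = N" "bumpv (mdp N) = (1/2)^(N+2)"
    "stp N < mdp N" "mdp N < stp (Suc N)"
proof -
  have p: "(2::real) \<le> 2^N" using pow_ge2[OF N] .
  have a: "2/2^N \<le> (1::real)" using p by simp
  have b: "(1::real)/2^(N+1) = (1/2^N)/2" by simp
  show "0 \<le> mdp N" using a by (simp add: mdp_def)
  have X: "(0::real) < 1/2^N" by simp
  have c: "(2::real)/2^N = 2 * (1/2^N)" "(2::real)/2^(Suc N) = 1/2^N" by simp_all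
  show "mdp N < 1" unfolding mdp_def by (simp add: field_simps)
  show "stp N < mdp N"
  proof -
    have "mdp N = stp N + 1/2^(N+1)" by (simp add: mdp_def stp_def)
    moreover have "(0::real) < 1/2^(N+1)" by simp
    ultimately show ?thesis by linarith
  qed
  show "mdp N < stp (Suc N)"
  proof -
    define X :: real where "X = 1/2^N"
    have "X > 0" by (simp add: X_def)
    moreover have "mdp N = 1 - 2 * X + X / 2" by (simp add: X_def mdp_def)
    moreover have "stp (Suc N) = 1 - X" by (simp add: X_def stp_def)
    ultimately show ?thesis by linarith
  qed
  show sg: "seg (mdp N) = N" using N by (intro seg_eq) (auto simp: mdp_def field_simps)
  have "tau (mdp N) = 1/2" unfolding tau_def sg by (simp add: mdp_def field_simps)
  thus "bumpv (mdp N) = (1/2)^(N+2)"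
    using \<open>mdp N < 1\<close> by (simp add: bumpv_lt1 sg alpha_def)
qed

lemma kink1:
  assumes N: "N \<ge> 1"
  shows "l1dist (gamma (stp N)) (gamma (mdp N)) = mdp N - stp N"
proof -
  note s = stp_facts[OF N] and m = mdp_facts[OF N]
  have "l1dist (gamma (stp N)) (gamma (mdp N)) = \<bar>stp N - mdp N\<bar>/2 + Bd (stp N) (mdp N)"
    using s m by (intro gdist) auto
  also have "Bd (stp N) (mdp N) = (1/2)^(N+2)"
  proof -
    have "sidx (stp N) = sidx (mdp N)" using s m by (simp add: sidx_def)
    hence "Bd (stp N) (mdp N) = \<bar>bumpv (stp N) - bumpv (mdp N)\<bar>" by (simp add: Bd_def)
    also have "\<dots> = \<bar>0 - (1/2)^(N+2)\<bar>"
    proof -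
      have b0: "bumpv (stp N) = 0" using s by simp
      show ?thesis by (simp only: b0 m(4))
    qed
    finally show ?thesis by simp
  qed
  also have "\<bar>stp N - mdp N\<bar> = 1/2^(N+1)" using m by (simp add: mdp_def stp_def)
  also have "1/2^(N+1)/2 + (1/2::real)^(N+2) = mdp N - stp N" by (simp add: mdp_def stp_def power_divide)
  finally show ?thesis .
qed

lemma kink2:
  assumes N: "N \<ge> 1"
  shows "l1dist (gamma (mdp N)) (gamma (stp (Suc N))) = stp (Suc N) - mdp N"
proof -
  note s = stp_facts[of "Suc N"] and m = mdp_facts[OF N]
  have "l1dist (gamma (mdp N)) (gamma (stp (Suc N))) = \<bar>mdp N - stp (Suc N)\<bar>/2 + Bd (mdp N) (stp (Suc N))"
    using s m by (intro gdist) auto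
  also have "Bd (mdp N) (stp (Suc N)) = (1/2)^(N+2)"
  proof -
    have "sidx (stp (Suc N)) \<noteq> sidx (mdp N)" using s m by (simp add: sidx_def)
    hence "Bd (mdp N) (stp (Suc N)) = bumpv (mdp N) + bumpv (stp (Suc N))" by (simp add: Bd_def)
    also have "\<dots> = (1/2)^(N+2) + 0"
    proof -
      have b0: "bumpv (stp (Suc N)) = 0" using s by simp
      show ?thesis by (simp only: b0 m(4))
    qed
    finally show ?thesis by simp
  qed
  also have "\<bar>mdp N - stp (Suc N)\<bar> = 1/2^(N+1)" using m by (simp add: mdp_def stp_def field_simps)
  also have "1/2^(N+1)/2 + (1/2::real)^(N+2) = stp (Suc N) - mdp N" by (simp add: mdp_def stp_def power_divide field_simps)
  finally show ?thesis .
qed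

lemma kink_end:
  assumes N: "N \<ge> 1"
  shows "l1dist (gamma (stp N)) (gamma 1) = (1 - stp N)/2"
proof -
  note s = stp_facts[OF N]
  have "l1dist (gamma (stp N)) (gamma 1) = \<bar>stp N - 1\<bar>/2 + Bd (stp N) 1"
    using s by (intro gdist) auto
  also have "Bd (stp N) 1 = 0"
  proof -
    have "bumpv 1 = 0" by (simp add: bumpv_def)
    thus ?thesis using s by (simp add: Bd_def)
  qed
  finally show ?thesis using s by simp
qed

lemma stp_mono: "N \<le> M \<Longrightarrow> stp N \<le> stp M"
proof -
  assume "N \<le> M"
  hence "(2::real)^N \<le> 2^M" by (intro power_increasing) auto
  hence "2/2^M \<le> (2::real)/2^N" by (intro divide_left_mono) auto
  thus ?thesis by (simp add: stp_def)
qed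

lemma stp_tendsto: "stp \<longlonglongrightarrow> 1"
proof -
  have "(\<lambda>N. 2 * (1/2::real)^N) \<longlonglongrightarrow> 2 * 0"
    by (intro tendsto_mult tendsto_const LIMSEQ_power_zero) auto
  hence "(\<lambda>N. 1 - 2 * (1/2::real)^N) \<longlonglongrightarrow> 1 - 2 * 0" by (intro tendsto_diff tendsto_const)
  moreover have "stp = (\<lambda>N. 1 - 2 * (1/2::real)^N)" by (rule ext) (simp add: stp_def power_divide)
  ultimately show ?thesis by simp
qed

lemma th_basic:
  assumes r: "r > 0" and y: "0 \<le> y" "y \<le> r" and z: "0 \<le> z" "z \<le> r"
  shows "theta_r r y z \<le> \<bar>y - z\<bar>" "\<bar>y - z\<bar>/2 \<le> theta_r r y z" "theta_r r y z = theta_r r z y"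
proof -
  have yy: "0 \<le> y/r" "y/r \<le> 1" "0 \<le> z/r" "z/r \<le> 1" using r y z by auto
  have e: "\<bar>y/r - z/r\<bar> = \<bar>y - z\<bar>/r" using r by (simp add: diff_divide_distrib[symmetric] abs_divide)
  have "r * l1dist (gamma (y/r)) (gamma (z/r)) \<le> r * \<bar>y/r - z/r\<bar>"
    using gdist_le(1)[OF yy] r by simp
  thus "theta_r r y z \<le> \<bar>y - z\<bar>" using e r by (simp add: theta_r_def)
  have "r * (\<bar>y/r - z/r\<bar>/2) \<le> r * l1dist (gamma (y/r)) (gamma (z/r))"
    using gdist_le(2)[OF yy] r by simp
  thus "\<bar>y - z\<bar>/2 \<le> theta_r r y z" using e r by (simp add: theta_r_def)
  show "theta_r r y z = theta_r r z y" by (simp add: theta_r_def l1dist_comm)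
qed

lemma th_mono:
  assumes r: "r > 0" and "0 \<le> t" "t \<le> a" "a \<le> s" "s \<le> r"
  shows "theta_r r s a \<le> theta_r r s t"
proof -
  have "l1dist (gamma (s/r)) (gamma (a/r)) \<le> l1dist (gamma (s/r)) (gamma (t/r))"
    using assms by (intro gdist_mono) (auto simp: divide_right_mono)
  thus ?thesis using r by (simp add: theta_r_def)
qed

lemma th_kinks:
  assumes r: "r > 0" and N: "N \<ge> 1"
  shows "theta_r r (r * stp N) (r * mdp N) = r * mdp N - r * stp N"
    "theta_r r (r * mdp N) (r * stp (Suc N)) = r * stp (Suc N) - r * mdp N"
    "theta_r r (r * stp N) r = r * (1 - stp N)/2"
proof -
  have "theta_r r (r * stp N) (r * mdp N) = r * l1dist (gamma (stp N)) (gamma (mdp N))" using r by (simp add: theta_r_def)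
  also have "\<dots> = r * (mdp N - stp N)" by (simp only: kink1[OF N])
  finally show "theta_r r (r * stp N) (r * mdp N) = r * mdp N - r * stp N" by (simp add: right_diff_distrib)
  have "theta_r r (r * mdp N) (r * stp (Suc N)) = r * l1dist (gamma (mdp N)) (gamma (stp (Suc N)))" using r by (simp add: theta_r_def)
  also have "\<dots> = r * (stp (Suc N) - mdp N)" by (simp only: kink2[OF N])
  finally show "theta_r r (r * mdp N) (r * stp (Suc N)) = r * stp (Suc N) - r * mdp N" by (simp add: right_diff_distrib)
  have "theta_r r (r * stp N) r = r * l1dist (gamma (stp N)) (gamma 1)" using r by (simp add: theta_r_def)
  also have "\<dots> = r * ((1 - stp N)/2)" by (simp only: kink_end[OF N])
  finally show "theta_r r (r * stp N) r = r * (1 - stp N)/2" by simp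
qed


locale cst =
  fixes P :: "nat \<Rightarrow> (nat \<Rightarrow> real) set"
    and \<rho> :: "nat \<Rightarrow> (nat \<Rightarrow> real) \<Rightarrow> (nat \<Rightarrow> real) \<Rightarrow> real"
    and L :: "nat \<Rightarrow> (nat \<Rightarrow> real) set"
    and q :: "nat \<Rightarrow> nat \<Rightarrow> (nat \<Rightarrow> real)"
    and j :: "(nat \<Rightarrow> real) \<Rightarrow> 'a::metric_space"
  assumes C: "construction P \<rho> L q"
    and J: "\<forall>k\<ge>1. \<forall>x\<in>P k. \<forall>y\<in>P k. dist (j x) (j y) = \<rho> k x y"
begin

definition D where "D x y = dist (j x) (j y)"

lemma D_rho: "k \<ge> 1 \<Longrightarrow> x \<in> P k \<Longrightarrow> y \<in> P k \<Longrightarrow> D x y = \<rho> k x y"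
  using J by (simp add: D_def)

lemma D_sym: "D x y = D y x" by (simp add: D_def dist_commute)
lemma D_self: "D x x = 0" by (simp add: D_def)
lemma D_tri: "D x z \<le> D x y + D y z" by (simp add: D_def dist_triangle)
lemma D_nonneg: "0 \<le> D x y" by (simp add: D_def)

lemma P1: "P 1 = {p. p 0 \<in> {0..1} \<and> (\<forall>i\<ge>1. p i = 0)}"
  using C unfolding construction_def by (elim conjE)
lemma rho1: "x \<in> P 1 \<Longrightarrow> y \<in> P 1 \<Longrightarrow> \<rho> 1 x y = theta_r 1 (x 0) (y 0)"
  using C unfolding construction_def by (elim conjE) blast
lemma L1: "L 1 = {(\<lambda>i. if i = 0 then 1 else 0)}"
  using C unfolding construction_def by (elim conjE)

lemma Cstep: "k \<ge> 1 \<Longrightarrow>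
        inj_on (q k) {1::nat..} \<and>
        q k ` {1::nat..} \<subseteq> P k - L k \<and>
        (\<forall>x\<in>P k - L k. \<forall>\<epsilon>>0. \<exists>n\<ge>1. \<rho> k x (q k n) < \<epsilon>) \<and>
        inj_on (\<lambda>p. p (k - 1)) (q k ` {1::nat..}) \<and>
        (\<forall>n\<ge>1. q k n (k - 1) \<noteq> 0) \<and>
        P (Suc k) = (P k - q k ` {1::nat..}) \<union>
                    {(q k n)(k := y) | n y. n \<ge> 1 \<and> y \<in> {0..rad k n}} \<and>
        (\<forall>n\<ge>1. \<forall>m\<ge>1. \<forall>y1\<in>{0..rad k n}. \<forall>y2\<in>{0..rad k m}.
            \<rho> (Suc k) ((q k n)(k := y1)) ((q k m)(k := y2)) =
              (if n = m then theta_r (rad k n) y1 y2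
               else theta_r (rad k n) y1 0 + \<rho> k (q k n) (q k m) + theta_r (rad k m) 0 y2)) \<and>
        (\<forall>n\<ge>1. \<forall>y1\<in>{0..rad k n}. \<forall>x\<in>P k - q k ` {1::nat..}.
            \<rho> (Suc k) ((q k n)(k := y1)) x = theta_r (rad k n) y1 0 + \<rho> k (q k n) x \<and>
            \<rho> (Suc k) x ((q k n)(k := y1)) = \<rho> k x (q k n) + theta_r (rad k n) 0 y1) \<and>
        (\<forall>x1\<in>P k - q k ` {1::nat..}. \<forall>x2\<in>P k - q k ` {1::nat..}.
            \<rho> (Suc k) x1 x2 = \<rho> k x1 x2) \<and>
        L (Suc k) = L k \<union> {(q k n)(k := rad k n) | n. n \<ge> 1}"
proof -
  assume k: "k \<ge> 1"
  have "\<forall>k\<ge>1. inj_on (q k) {1::nat..} \<and>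
        q k ` {1::nat..} \<subseteq> P k - L k \<and>
        (\<forall>x\<in>P k - L k. \<forall>\<epsilon>>0. \<exists>n\<ge>1. \<rho> k x (q k n) < \<epsilon>) \<and>
        inj_on (\<lambda>p. p (k - 1)) (q k ` {1::nat..}) \<and>
        (\<forall>n\<ge>1. q k n (k - 1) \<noteq> 0) \<and>
        P (Suc k) = (P k - q k ` {1::nat..}) \<union>
                    {(q k n)(k := y) | n y. n \<ge> 1 \<and> y \<in> {0..rad k n}} \<and>
        (\<forall>n\<ge>1. \<forall>m\<ge>1. \<forall>y1\<in>{0..rad k n}. \<forall>y2\<in>{0..rad k m}.
            \<rho> (Suc k) ((q k n)(k := y1)) ((q k m)(k := y2)) =
              (if n = m then theta_r (rad k n) y1 y2
               else theta_r (rad k n) y1 0 + \<rho> k (q k n) (q k m) + theta_r (rad k m) 0 y2)) \<and>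
        (\<forall>n\<ge>1. \<forall>y1\<in>{0..rad k n}. \<forall>x\<in>P k - q k ` {1::nat..}.
            \<rho> (Suc k) ((q k n)(k := y1)) x = theta_r (rad k n) y1 0 + \<rho> k (q k n) x \<and>
            \<rho> (Suc k) x ((q k n)(k := y1)) = \<rho> k x (q k n) + theta_r (rad k n) 0 y1) \<and>
        (\<forall>x1\<in>P k - q k ` {1::nat..}. \<forall>x2\<in>P k - q k ` {1::nat..}.
            \<rho> (Suc k) x1 x2 = \<rho> k x1 x2) \<and>
        L (Suc k) = L k \<union> {(q k n)(k := rad k n) | n. n \<ge> 1}"
    using C unfolding construction_def by (elim conjE)
  thus ?thesis using k by (elim allE impE)
qed

lemma qinj: "k \<ge> 1 \<Longrightarrow> n \<ge> 1 \<Longrightarrow> m \<ge> 1 \<Longrightarrow> q k n = q k m \<Longrightarrow> n = m"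
  using Cstep[of k, THEN conjunct1] unfolding inj_on_def by simp
lemma qPL: "k \<ge> 1 \<Longrightarrow> q k ` {1::nat..} \<subseteq> P k - L k"
  using Cstep[of k, THEN conjunct2, THEN conjunct1] .
lemma qP: "k \<ge> 1 \<Longrightarrow> n \<ge> 1 \<Longrightarrow> q k n \<in> P k"
  using qPL[of k] by auto
lemma qL: "k \<ge> 1 \<Longrightarrow> n \<ge> 1 \<Longrightarrow> q k n \<notin> L k"
  using qPL[of k] by auto
lemma dens: "k \<ge> 1 \<Longrightarrow> x \<in> P k \<Longrightarrow> x \<notin> L k \<Longrightarrow> e > 0 \<Longrightarrow> \<exists>n\<ge>1. \<rho> k x (q k n) < e"
  using Cstep[of k, THEN conjunct2, THEN conjunct2, THEN conjunct1] by simp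
lemma qnz: "k \<ge> 1 \<Longrightarrow> n \<ge> 1 \<Longrightarrow> q k n (k - 1) \<noteq> 0"
  using Cstep[of k, THEN conjunct2, THEN conjunct2, THEN conjunct2, THEN conjunct2, THEN conjunct1] by simp
lemma Pstep: "k \<ge> 1 \<Longrightarrow> P (Suc k) = (P k - q k ` {1::nat..}) \<union>
                    {(q k n)(k := y) | n y. n \<ge> 1 \<and> y \<in> {0..rad k n}}"
  using Cstep[of k, THEN conjunct2, THEN conjunct2, THEN conjunct2, THEN conjunct2, THEN conjunct2, THEN conjunct1] .
lemma rss: "k \<ge> 1 \<Longrightarrow> n \<ge> 1 \<Longrightarrow> m \<ge> 1 \<Longrightarrow> y1 \<in> {0..rad k n} \<Longrightarrow> y2 \<in> {0..rad k m} \<Longrightarrow>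
            \<rho> (Suc k) ((q k n)(k := y1)) ((q k m)(k := y2)) =
              (if n = m then theta_r (rad k n) y1 y2
               else theta_r (rad k n) y1 0 + \<rho> k (q k n) (q k m) + theta_r (rad k m) 0 y2)"
  using Cstep[of k, THEN conjunct2, THEN conjunct2, THEN conjunct2, THEN conjunct2, THEN conjunct2, THEN conjunct2, THEN conjunct1] by simp
lemma rsb: "k \<ge> 1 \<Longrightarrow> n \<ge> 1 \<Longrightarrow> y1 \<in> {0..rad k n} \<Longrightarrow> x \<in> P k \<Longrightarrow> x \<notin> q k ` {1::nat..} \<Longrightarrow>
            \<rho> (Suc k) ((q k n)(k := y1)) x = theta_r (rad k n) y1 0 + \<rho> k (q k n) x \<and>
            \<rho> (Suc k) x ((q k n)(k := y1)) = \<rho> k x (q k n) + theta_r (rad k n) 0 y1"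
  using Cstep[of k, THEN conjunct2, THEN conjunct2, THEN conjunct2, THEN conjunct2, THEN conjunct2, THEN conjunct2, THEN conjunct2, THEN conjunct1] by simp
lemma rbb: "k \<ge> 1 \<Longrightarrow> x1 \<in> P k - q k ` {1::nat..} \<Longrightarrow> x2 \<in> P k - q k ` {1::nat..} \<Longrightarrow>
            \<rho> (Suc k) x1 x2 = \<rho> k x1 x2"
  using Cstep[of k, THEN conjunct2, THEN conjunct2, THEN conjunct2, THEN conjunct2, THEN conjunct2, THEN conjunct2, THEN conjunct2, THEN conjunct2, THEN conjunct1] by simp
lemma Lstep: "k \<ge> 1 \<Longrightarrow> L (Suc k) = L k \<union> {(q k n)(k := rad k n) | n. n \<ge> 1}"
  using Cstep[of k, THEN conjunct2, THEN conjunct2, THEN conjunct2, THEN conjunct2, THEN conjunct2, THEN conjunct2, THEN conjunct2, THEN conjunct2, THEN conjunct2] .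

lemma rad_pos: "0 < rad k n" by (simp add: rad_def)

lemma vanish: "k \<ge> 1 \<Longrightarrow> x \<in> P k \<Longrightarrow> i \<ge> k \<Longrightarrow> x i = 0"
proof (induction k arbitrary: x i rule: nat_induct_at_least)
  case base thus ?case using P1 by auto
next
  case (Suc k)
  have xm: "x \<in> (P k - q k ` {1..}) \<union> {(q k n)(k := y) | n y. n \<ge> 1 \<and> y \<in> {0..rad k n}}"
    using Suc.prems(1) Pstep[OF Suc.hyps] by simp
  from xm show ?case
  proof (elim UnE)
    assume "x \<in> P k - q k ` {1..}" thus ?thesis using Suc by auto
  next
    assume "x \<in> {(q k n)(k := y) | n y. n \<ge> 1 \<and> y \<in> {0..rad k n}}"
    then obtain n y where "n \<ge> 1" "x = (q k n)(k := y)" by auto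
    thus ?thesis using Suc.IH[OF qP[OF Suc.hyps]] Suc.prems by auto
  qed
qed

lemma shape:
  assumes k: "k \<ge> 1" and x: "x \<in> P (Suc k)"
  shows "(x \<in> P k \<and> x \<notin> q k ` {1..} \<and> x k = 0) \<or> (\<exists>n\<ge>1. x = (q k n)(k := x k) \<and> x k \<in> {0..rad k n})"
proof -
  have xm: "x \<in> (P k - q k ` {1..}) \<union> {(q k n)(k := y) | n y. n \<ge> 1 \<and> y \<in> {0..rad k n}}"
    using x Pstep[OF k] by simp
  from xm show ?thesis
  proof (elim UnE)
    assume "x \<in> P k - q k ` {1..}" thus ?thesis using vanish[OF k] by auto
  next
    assume "x \<in> {(q k n)(k := y) | n y. n \<ge> 1 \<and> y \<in> {0..rad k n}}"
    then obtain n y where "n \<ge> 1" "x = (q k n)(k := y)" "y \<in> {0..rad k n}" by auto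
    thus ?thesis by auto
  qed
qed

lemma qk0: "k \<ge> 1 \<Longrightarrow> n \<ge> 1 \<Longrightarrow> (q k n)(k := 0) = q k n"
  using vanish[OF _ qP] by (auto simp: fun_eq_iff)

lemma mono1: "k \<ge> 1 \<Longrightarrow> x \<in> P k \<Longrightarrow> x \<in> P (Suc k)"
proof -
  assume k: "k \<ge> 1" and x: "x \<in> P k"
  show ?thesis
  proof (cases "x \<in> q k ` {1..}")
    case True
    then obtain n where n: "n \<ge> 1" "x = q k n" by auto
    hence "x = (q k n)(k := 0)" using qk0[OF k n(1)] by simp
    moreover have "(0::real) \<in> {0..rad k n}" using rad_pos[of k n] by simp
    ultimately show ?thesis using Pstep[OF k] n by blast
  next
    case False thus ?thesis using Pstep[OF k] x by blast
  qed
qed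

lemma mono:
  assumes "k \<ge> 1" "k \<le> m" "x \<in> P k" shows "x \<in> P m"
  using assms(2)
proof (induction m rule: dec_induct)
  case base thus ?case using assms by simp
next
  case (step m) thus ?case using mono1[of m] assms(1) by simp
qed

lemma trunc1: "k \<ge> 1 \<Longrightarrow> x \<in> P (Suc k) \<Longrightarrow> x(k := 0) \<in> P k"
proof -
  assume k: "k \<ge> 1" and x: "x \<in> P (Suc k)"
  from shape[OF k x] show ?thesis
  proof
    assume "x \<in> P k \<and> x \<notin> q k ` {1..} \<and> x k = 0"
    moreover hence "x(k := 0) = x" by auto
    ultimately show ?thesis by simp
  next
    assume "\<exists>n\<ge>1. x = (q k n)(k := x k) \<and> x k \<in> {0..rad k n}"
    then obtain n where n: "n \<ge> 1" "x = (q k n)(k := x k)" by auto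
    hence "x(k := 0) = q k n" using qk0[OF k n(1)] by (metis fun_upd_upd)
    thus ?thesis using qP[OF k n(1)] by simp
  qed
qed

lemma SpD: "k \<ge> 1 \<Longrightarrow> n \<ge> 1 \<Longrightarrow> y1 \<in> {0..rad k n} \<Longrightarrow> y2 \<in> {0..rad k n} \<Longrightarrow>
   D ((q k n)(k := y1)) ((q k n)(k := y2)) = theta_r (rad k n) y1 y2"
proof -
  assume a: "k \<ge> 1" "n \<ge> 1" "y1 \<in> {0..rad k n}" "y2 \<in> {0..rad k n}"
  have "(q k n)(k := y1) \<in> P (Suc k)" "(q k n)(k := y2) \<in> P (Suc k)" using a Pstep[OF a(1)] by blast+
  hence "D ((q k n)(k := y1)) ((q k n)(k := y2)) = \<rho> (Suc k) ((q k n)(k := y1)) ((q k n)(k := y2))"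
    using D_rho[of "Suc k"] by simp
  also have "\<dots> = theta_r (rad k n) y1 y2" using rss[OF a(1,2,2,3,4)] by simp
  finally show ?thesis .
qed

lemma sp0: "k \<ge> 1 \<Longrightarrow> n \<ge> 1 \<Longrightarrow> ((q k n)(k := y))(k := 0) = q k n"
  using qk0 by simp

lemma D_rho_Suc: "k \<ge> 1 \<Longrightarrow> x \<in> P (Suc k) \<Longrightarrow> y \<in> P (Suc k) \<Longrightarrow> D x y = \<rho> (Suc k) x y"
  using D_rho[of "Suc k"] by simp

lemma Par:
  assumes k: "k \<ge> 1" and x: "x \<in> P (Suc k)" and w: "w \<in> P (Suc k)" and ne: "x(k:=0) \<noteq> w(k:=0)"
  shows "D x w = D x (x(k:=0)) + D (x(k:=0)) (w(k:=0)) + D (w(k:=0)) w"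
proof -
  have r0: "(0::real) \<in> {0..rad k n}" for n using rad_pos[of k n] by simp
  from shape[OF k x] show ?thesis
  proof
    assume xb: "x \<in> P k \<and> x \<notin> q k ` {1..} \<and> x k = 0"
    hence x0: "x(k:=0) = x" by auto
    from shape[OF k w] show ?thesis
    proof
      assume "w \<in> P k \<and> w \<notin> q k ` {1..} \<and> w k = 0"
      hence "w(k:=0) = w" by auto
      thus ?thesis using x0 by (simp add: D_self)
    next
      assume "\<exists>n\<ge>1. w = (q k n)(k := w k) \<and> w k \<in> {0..rad k n}"
      then obtain n where n: "n \<ge> 1" "w = (q k n)(k := w k)" "w k \<in> {0..rad k n}" by auto
      have w0: "w(k:=0) = q k n" using sp0[OF k n(1)] n(2) by metis
      have "D x w = \<rho> (Suc k) x ((q k n)(k := w k))" using D_rho_Suc[OF k x w] n(2) by simp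
      also have "\<dots> = \<rho> k x (q k n) + theta_r (rad k n) 0 (w k)" using rsb[OF k n(1) n(3)] xb by simp
      also have "\<rho> k x (q k n) = D x (q k n)" using D_rho[OF k] xb qP[OF k n(1)] by simp
      also have "theta_r (rad k n) 0 (w k) = D ((q k n)(k := 0)) ((q k n)(k := w k))"
        using SpD[OF k n(1) r0 n(3)] by simp
      also have "\<dots> = D (q k n) w" using qk0[OF k n(1)] n(2) by simp
      finally show ?thesis using x0 w0 by (simp add: D_self)
    qed
  next
    assume "\<exists>n\<ge>1. x = (q k n)(k := x k) \<and> x k \<in> {0..rad k n}"
    then obtain n where n: "n \<ge> 1" "x = (q k n)(k := x k)" "x k \<in> {0..rad k n}" by auto
    have x0: "x(k:=0) = q k n" using sp0[OF k n(1)] n(2) by metis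
    have Dx: "D x (q k n) = theta_r (rad k n) (x k) 0"
    proof -
      have "D x (q k n) = D ((q k n)(k := x k)) ((q k n)(k := 0))" using qk0[OF k n(1)] n(2) by simp
      also have "\<dots> = theta_r (rad k n) (x k) 0" using SpD[OF k n(1) n(3) r0] by simp
      finally show ?thesis .
    qed
    from shape[OF k w] show ?thesis
    proof
      assume wb: "w \<in> P k \<and> w \<notin> q k ` {1..} \<and> w k = 0"
      hence w0: "w(k:=0) = w" by auto
      have "D x w = \<rho> (Suc k) ((q k n)(k := x k)) w" using D_rho_Suc[OF k x w] n(2) by simp
      also have "\<dots> = theta_r (rad k n) (x k) 0 + \<rho> k (q k n) w" using rsb[OF k n(1) n(3)] wb by simp
      also have "\<rho> k (q k n) w = D (q k n) w" using D_rho[OF k] wb qP[OF k n(1)] by simp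
      finally show ?thesis using x0 w0 Dx by (simp add: D_self)
    next
      assume "\<exists>m\<ge>1. w = (q k m)(k := w k) \<and> w k \<in> {0..rad k m}"
      then obtain m where m: "m \<ge> 1" "w = (q k m)(k := w k)" "w k \<in> {0..rad k m}" by auto
      have w0: "w(k:=0) = q k m" using sp0[OF k m(1)] m(2) by metis
      have nm: "n \<noteq> m" using ne x0 w0 by auto
      have Dw: "D (q k m) w = theta_r (rad k m) 0 (w k)"
      proof -
        have "D (q k m) w = D ((q k m)(k := 0)) ((q k m)(k := w k))" using qk0[OF k m(1)] m(2) by simp
        also have "\<dots> = theta_r (rad k m) 0 (w k)" using SpD[OF k m(1) r0 m(3)] by simp
        finally show ?thesis .
      qed
      have "D x w = \<rho> (Suc k) ((q k n)(k := x k)) ((q k m)(k := w k))" using D_rho_Suc[OF k x w] n(2) m(2) by simp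
      also have "\<dots> = theta_r (rad k n) (x k) 0 + \<rho> k (q k n) (q k m) + theta_r (rad k m) 0 (w k)"
        using rss[OF k n(1) m(1) n(3) m(3)] nm by simp
      also have "\<rho> k (q k n) (q k m) = D (q k n) (q k m)" using D_rho[OF k] qP[OF k n(1)] qP[OF k m(1)] by simp
      finally show ?thesis using x0 w0 Dx Dw by simp
    qed
  qed
qed

lemma hgt:
  assumes k: "k \<ge> 1" and x: "x \<in> P (Suc k)"
  shows "0 \<le> x k \<and> x k \<le> (1/2)^(k+1) \<and> D x (x(k:=0)) \<le> x k \<and>
         (x k \<noteq> 0 \<longrightarrow> (\<exists>n\<ge>1. x(k:=0) = q k n \<and> x k \<le> rad k n))"
proof -
  from shape[OF k x] show ?thesis
  proof
    assume xb: "x \<in> P k \<and> x \<notin> q k ` {1..} \<and> x k = 0"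
    hence "x(k:=0) = x" by auto
    thus ?thesis using xb by (simp add: D_self)
  next
    assume "\<exists>n\<ge>1. x = (q k n)(k := x k) \<and> x k \<in> {0..rad k n}"
    then obtain n where n: "n \<ge> 1" "x = (q k n)(k := x k)" "x k \<in> {0..rad k n}" by auto
    have x0: "x(k:=0) = q k n" using sp0[OF k n(1)] n(2) by metis
    have r0: "(0::real) \<in> {0..rad k n}" using rad_pos[of k n] by simp
    have "D x (q k n) = D ((q k n)(k := x k)) ((q k n)(k := 0))" using qk0[OF k n(1)] n(2) by simp
    also have "\<dots> = theta_r (rad k n) (x k) 0" using SpD[OF k n(1) n(3) r0] by simp
    also have "\<dots> \<le> \<bar>x k - 0\<bar>" using th_basic(1)[OF rad_pos, of "x k" k n 0] n(3) r0 by simp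
    finally have d: "D x (x(k:=0)) \<le> x k" using x0 n(3) by simp
    have "rad k n \<le> (1/2)^(k+1)" unfolding rad_def using n(1) by (intro power_decreasing) auto
    thus ?thesis using d n x0 by auto
  qed
qed

lemma L_sub_P: "k \<ge> 1 \<Longrightarrow> L k \<subseteq> P k"
proof (induction k rule: nat_induct_at_least)
  case base thus ?case using P1 L1 by auto
next
  case (Suc k)
  show ?case
  proof
    fix x assume "x \<in> L (Suc k)"
    hence "x \<in> L k \<or> (\<exists>n\<ge>1. x = (q k n)(k := rad k n))" using Lstep[OF Suc.hyps] by auto
    thus "x \<in> P (Suc k)"
    proof
      assume xL: "x \<in> L k"
      hence "x \<notin> q k ` {1..}" using qL[OF Suc.hyps] by auto
      thus ?thesis using xL Suc.IH Pstep[OF Suc.hyps] by auto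
    next
      assume "\<exists>n\<ge>1. x = (q k n)(k := rad k n)"
      then obtain n where "n \<ge> 1" "x = (q k n)(k := rad k n)" by auto
      moreover have "rad k n \<in> {0..rad k n}" using rad_pos[of k n] by simp
      ultimately show ?thesis using Pstep[OF Suc.hyps] by blast
    qed
  qed
qed

lemma L_mono1: "k \<ge> 1 \<Longrightarrow> L k \<subseteq> L (Suc k)"
  using Lstep by auto

lemma L_mono:
  assumes "k \<ge> 1" "k \<le> m" shows "L k \<subseteq> L m"
  using assms(2)
proof (induction m rule: dec_induct)
  case base thus ?case by simp
next
  case (step m) thus ?case using L_mono1[of m] assms(1) by auto
qed

definition e0 :: "nat \<Rightarrow> real" where "e0 = (\<lambda>i. if i = 0 then 1 else 0)"

lemma L_form: "k \<ge> 1 \<Longrightarrow> x \<in> L k \<Longrightarrow> x = e0 \<or> (\<exists>m n. 1 \<le> m \<and> m < k \<and> n \<ge> 1 \<and> x = (q m n)(m := rad m n))"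
proof (induction k arbitrary: x rule: nat_induct_at_least)
  case base thus ?case using L1 by (simp add: e0_def)
next
  case (Suc k)
  hence "x \<in> L k \<or> (\<exists>n\<ge>1. x = (q k n)(k := rad k n))" using Lstep[OF Suc.hyps] by auto
  thus ?case
  proof
    assume "x \<in> L k"
    from Suc.IH[OF this] show ?thesis
    proof
      assume "\<exists>m n. 1 \<le> m \<and> m < k \<and> n \<ge> 1 \<and> x = (q m n)(m := rad m n)"
      then obtain m n where "1 \<le> m \<and> m < k \<and> n \<ge> 1 \<and> x = (q m n)(m := rad m n)" by blast
      hence "1 \<le> m \<and> m < Suc k \<and> n \<ge> 1 \<and> x = (q m n)(m := rad m n)" by simp
      thus ?thesis by blast
    qed simp
  next
    assume "\<exists>n\<ge>1. x = (q k n)(k := rad k n)"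
    then obtain n where "n \<ge> 1" "x = (q k n)(k := rad k n)" by auto
    hence "1 \<le> k \<and> k < Suc k \<and> n \<ge> 1 \<and> x = (q k n)(k := rad k n)" using Suc.hyps by simp
    thus ?thesis by blast
  qed
qed

definition tr :: "nat \<Rightarrow> (nat \<Rightarrow> real) \<Rightarrow> (nat \<Rightarrow> real)" where
  "tr m x = (\<lambda>i. if i < m then x i else 0)"

lemma tr_id: "k \<ge> 1 \<Longrightarrow> x \<in> P k \<Longrightarrow> tr k x = x"
  using vanish[of k x] by (auto simp: tr_def fun_eq_iff)

lemma tr_P:
  assumes m: "1 \<le> m" and mM: "m \<le> M" and x: "x \<in> P M"
  shows "tr m x \<in> P m"
  using mM x
proof (induction M arbitrary: x rule: dec_induct)
  case base thus ?case using tr_id m by simp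
next
  case (step M)
  have M: "M \<ge> 1" using step.hyps m by simp
  have "x(M := 0) \<in> P M" using trunc1[OF M step.prems] .
  moreover have "tr m (x(M := 0)) = tr m x" using step.hyps by (auto simp: tr_def fun_eq_iff)
  ultimately show ?case using step.IH by metis
qed

lemma chain:
  assumes M: "Suc K \<le> M" and x: "x \<in> P M"
  shows "D x (tr (Suc K) x) \<le> (\<Sum>m\<in>{Suc K..<M}. x m)"
  using M x
proof (induction M arbitrary: x rule: dec_induct)
  case base thus ?case using tr_id[of "Suc K" x] by (simp add: D_self)
next
  case (step M)
  have M1: "M \<ge> 1" using step.hyps by simp
  define x' where "x' = x(M := 0)"
  have x'P: "x' \<in> P M" using trunc1[OF M1 step.prems] by (simp add: x'_def)
  have tr: "tr (Suc K) x = tr (Suc K) x'" using step.hyps by (auto simp: tr_def fun_eq_iff x'_def)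
  have "D x (tr (Suc K) x) \<le> D x x' + D x' (tr (Suc K) x')" using tr D_tri by simp
  also have "D x x' \<le> x M" using hgt[OF M1 step.prems] by (simp add: x'_def)
  also have "D x' (tr (Suc K) x') \<le> (\<Sum>m\<in>{Suc K..<M}. x' m)" using step.IH[OF x'P] .
  also have "(\<Sum>m\<in>{Suc K..<M}. x' m) = (\<Sum>m\<in>{Suc K..<M}. x m)" by (intro sum.cong) (auto simp: x'_def)
  finally show ?case using step.hyps by (simp add: add.commute)
qed

lemma coord:
  assumes m: "1 \<le> m" "m < M" and x: "x \<in> P M"
  shows "0 \<le> x m \<and> x m \<le> (1/2)^(m+1) \<and> (x m \<noteq> 0 \<longrightarrow> (\<exists>n\<ge>1. tr m x = q m n \<and> x m \<le> rad m n))"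
proof -
  have t: "tr (Suc m) x \<in> P (Suc m)" using tr_P[of "Suc m" M x] m x by simp
  have a: "(tr (Suc m) x) m = x m" by (simp add: tr_def)
  have b: "(tr (Suc m) x)(m := 0) = tr m x" by (auto simp: tr_def fun_eq_iff)
  show ?thesis using hgt[OF m(1) t] a b by simp
qed

end


context cst begin

definition spike :: "nat \<Rightarrow> (nat \<Rightarrow> real) \<Rightarrow> real \<Rightarrow> bool" where
  "spike K bb r \<longleftrightarrow> r > 0 \<and> (\<forall>i\<ge>K. bb i = 0) \<and> (\<forall>y\<in>{0..r}. bb(K:=y) \<in> P (Suc K)) \<and>
     (\<forall>y\<in>{0..r}. \<forall>y'\<in>{0..r}. D (bb(K:=y)) (bb(K:=y')) = theta_r r y y') \<and>
     bb(K:=r) \<in> L (Suc K) \<and>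
     (\<forall>x\<in>P (Suc K). (\<forall>i<K. x i = bb i) \<longrightarrow> x = bb(K := x K) \<and> x K \<in> {0..r})"

lemma spike0: "spike 0 (\<lambda>_. 0) 1"
  unfolding spike_def
proof (intro conjI ballI allI impI)
  show "(0::real) < 1" by simp
  fix y assume y: "y \<in> {0..(1::real)}"
  show "(\<lambda>_. 0)(0 := y) \<in> P (Suc 0)" using P1 y by auto
  fix y' assume y': "y' \<in> {0..(1::real)}"
  have "(\<lambda>_. 0)(0 := y) \<in> P 1" "(\<lambda>_. 0)(0 := y') \<in> P 1" using P1 y y' by auto
  thus "D ((\<lambda>_. 0)(0 := y)) ((\<lambda>_. 0)(0 := y')) = theta_r 1 y y'"
    using D_rho[of 1] rho1 by simp
next
  show "(\<lambda>_. 0::real)(0 := 1) \<in> L (Suc 0)" using L1 by (auto simp: fun_eq_iff)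
next
  fix x :: "nat \<Rightarrow> real" assume "x \<in> P (Suc 0)"
  hence "x \<in> P 1" by simp
  thus "x = (\<lambda>_. 0)(0 := x 0)" "x 0 \<in> {0..1}" using P1 by (auto simp: fun_eq_iff)
qed simp

lemma spikeK:
  assumes K: "K \<ge> 1" and n: "n \<ge> 1"
  shows "spike K (q K n) (rad K n)"
  unfolding spike_def
proof (intro conjI ballI allI impI)
  show "0 < rad K n" by (rule rad_pos)
  fix i assume "K \<le> i" thus "q K n i = 0" using vanish[OF K qP[OF K n]] by simp
next
  fix y assume y: "y \<in> {0..rad K n}"
  thus "(q K n)(K := y) \<in> P (Suc K)" using Pstep[OF K] n by blast
  fix y' assume y': "y' \<in> {0..rad K n}"
  show "D ((q K n)(K := y)) ((q K n)(K := y')) = theta_r (rad K n) y y'" using SpD[OF K n y y'] .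
next
  show "(q K n)(K := rad K n) \<in> L (Suc K)" using Lstep[OF K] n by blast
next
  fix x assume x: "x \<in> P (Suc K)" and pre: "\<forall>i<K. x i = q K n i"
  have agree: "q K m = q K n" if m: "m \<ge> 1" "\<forall>i<K. q K m i = q K n i" for m
  proof
    fix i show "q K m i = q K n i"
      using m vanish[OF K qP[OF K m(1)], of i] vanish[OF K qP[OF K n], of i] by (cases "i < K") auto
  qed
  have H: "x = (q K n)(K := x K) \<and> x K \<in> {0..rad K n}"
  using shape[OF K x] proof
    assume xb: "x \<in> P K \<and> x \<notin> q K ` {1..} \<and> x K = 0"
    have "x = q K n"
    proof
      fix i show "x i = q K n i"
        using pre xb vanish[OF K, of x i] vanish[OF K qP[OF K n], of i] by (cases "i < K") auto
    qed
    thus ?thesis using xb n by auto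
  next
    assume "\<exists>m\<ge>1. x = (q K m)(K := x K) \<and> x K \<in> {0..rad K m}"
    then obtain m where m: "m \<ge> 1" "x = (q K m)(K := x K)" "x K \<in> {0..rad K m}" by auto
    have "\<forall>i<K. q K m i = q K n i"
    proof (intro allI impI)
      fix i assume iK: "i < K"
      have "x i = ((q K m)(K := x K)) i" using arg_cong[OF m(2), of "\<lambda>f. f i"] .
      hence "x i = q K m i" using iK by simp
      thus "q K m i = q K n i" using pre iK by simp
    qed
    hence "q K m = q K n" using agree m(1) by simp
    hence mn: "m = n" using qinj[OF K m(1) n] by simp
    show ?thesis unfolding mn[symmetric] using m(2) m(3) by (intro conjI)
  qed
  show "x = (q K n)(K := x K)" using H by (rule conjunct1)
  show "x K \<in> {0..rad K n}" using H by (rule conjunct2)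
qed

definition PP where "PP = {x. \<exists>M\<ge>1. x \<in> P M}"

definition Desc where "Desc K bb a = {x\<in>PP. (\<forall>i<K. x i = bb i) \<and> x K > a}"

lemma common_level:
  assumes "x \<in> PP" "w \<in> PP"
  shows "\<exists>M\<ge>Suc K. x \<in> P M \<and> w \<in> P M"
proof -
  obtain M1 M2 where m: "M1 \<ge> 1" "x \<in> P M1" "M2 \<ge> 1" "w \<in> P M2" using assms by (auto simp: PP_def)
  define M where "M = max (max M1 M2) (Suc K)"
  have "x \<in> P M" "w \<in> P M" using mono[of M1 M x] mono[of M2 M w] m by (auto simp: M_def)
  moreover have "M \<ge> Suc K" by (simp add: M_def)
  ultimately show ?thesis by blast
qed

lemma spike_pt:
  assumes sp: "spike K bb r" and x: "x \<in> P (Suc K)" and pre: "\<forall>i<K. x i = bb i"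
  shows "x = bb(K := x K)" "x K \<in> {0..r}"
  using sp x pre unfolding spike_def by blast+

lemma spike_D:
  assumes sp: "spike K bb r" and "y \<in> {0..r}" "y' \<in> {0..r}"
  shows "D (bb(K:=y)) (bb(K:=y')) = theta_r r y y'"
  using sp assms unfolding spike_def by blast

lemma T1:
  assumes sp: "spike K bb r" and a: "0 \<le> a" "a \<le> r"
    and x: "x \<in> Desc K bb a" and w: "w \<in> PP" "w \<notin> Desc K bb a"
  shows "D x (bb(K:=a)) \<le> D x w"
proof -
  have r: "r > 0" using sp by (simp add: spike_def)
  define cnd where "cnd z \<longleftrightarrow> (\<forall>i<K. z i = bb i) \<and> z K > a" for z
  have xc: "cnd x" using x by (simp add: Desc_def cnd_def)
  have wc: "\<not> cnd w" using w by (simp add: Desc_def cnd_def)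
  obtain M where M: "M \<ge> Suc K" "x \<in> P M" "w \<in> P M" using common_level[of x w K] x w by (auto simp: Desc_def)
  have "\<forall>x w. x \<in> P M \<longrightarrow> w \<in> P M \<longrightarrow> cnd x \<longrightarrow> \<not> cnd w \<longrightarrow> D x (bb(K:=a)) \<le> D x w"
    using M(1)
  proof (induction M rule: dec_induct)
    case base
    show ?case
    proof (intro allI impI)
      fix x w assume x: "x \<in> P (Suc K)" and w: "w \<in> P (Suc K)" and xc: "cnd x" and wc: "\<not> cnd w"
      define X where "X = x K"
      have xpre: "\<forall>i<K. x i = bb i" using xc by (simp add: cnd_def)
      have xs: "x = bb(K := X)" "X \<in> {0..r}" unfolding X_def
        by (rule spike_pt(1)[OF sp x xpre], rule spike_pt(2)[OF sp x xpre])
      have xa: "a < X" using xc by (simp add: cnd_def X_def)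
      have ar: "a \<in> {0..r}" using a by simp
      have Dxa: "D x (bb(K:=a)) = theta_r r X a" unfolding xs(1) using spike_D[OF sp xs(2) ar] .
      show "D x (bb(K:=a)) \<le> D x w"
      proof (cases "\<forall>i<K. w i = bb i")
        case True
        define W where "W = w K"
        have ws: "w = bb(K := W)" "W \<in> {0..r}" unfolding W_def
          by (rule spike_pt(1)[OF sp w True], rule spike_pt(2)[OF sp w True])
        have wa: "W \<le> a" using wc True by (auto simp: cnd_def W_def)
        have "D x w = theta_r r X W" unfolding xs(1) ws(1) using spike_D[OF sp xs(2) ws(2)] .
        moreover have "theta_r r X a \<le> theta_r r X W"
          using th_mono[OF r, of W a X] ws(2) wa xa xs(2) by simp
        ultimately show ?thesis using Dxa by simp
      next
        case False
        then obtain i where i: "i < K" "w i \<noteq> bb i" by auto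
        hence K1: "K \<ge> 1" by simp
        have bbK: "bb K = 0" using sp by (simp add: spike_def)
        have x0: "x(K:=0) = bb" unfolding xs(1) using bbK by (auto simp: fun_eq_iff)
        have ne: "x(K:=0) \<noteq> w(K:=0)"
        proof
          assume "x(K:=0) = w(K:=0)"
          hence "bb i = (w(K:=0)) i" using x0 by simp
          thus False using i by simp
        qed
        have "D x w = D x (x(K:=0)) + D (x(K:=0)) (w(K:=0)) + D (w(K:=0)) w"
          using Par[OF K1 x w ne] .
        hence "D x (x(K:=0)) \<le> D x w" using D_nonneg[of "x(K:=0)" "w(K:=0)"] D_nonneg[of "w(K:=0)" w] by linarith
        moreover have "D x (x(K:=0)) = theta_r r X 0"
        proof -
          have r0: "(0::real) \<in> {0..r}" using r by simp
          have "bb(K := 0) = bb" using bbK by (auto simp: fun_eq_iff)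
          hence "D x (x(K:=0)) = D (bb(K := X)) (bb(K := 0))" using x0 xs(1) by simp
          also have "\<dots> = theta_r r X 0" using spike_D[OF sp xs(2) r0] .
          finally show ?thesis .
        qed
        moreover have "theta_r r X a \<le> theta_r r X 0"
          using th_mono[OF r, of 0 a X] a xa xs(2) by simp
        ultimately show ?thesis using Dxa by simp
      qed
    qed
  next
    case (step M)
    have M1: "M \<ge> 1" using step.hyps by simp
    show ?case
    proof (intro allI impI)
      fix x w assume x: "x \<in> P (Suc M)" and w: "w \<in> P (Suc M)" and xc: "cnd x" and wc: "\<not> cnd w"
      define x' where "x' = x(M:=0)"
      define w' where "w' = w(M:=0)"
      have x'P: "x' \<in> P M" and w'P: "w' \<in> P M" using trunc1[OF M1] x w by (simp_all add: x'_def w'_def)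
      have cx: "cnd x' = cnd x" "cnd w' = cnd w" using step.hyps by (auto simp: cnd_def x'_def w'_def)
      have ne: "x' \<noteq> w'" using cx xc wc by auto
      have "D x w = D x x' + D x' w' + D w' w" using Par[OF M1 x w] ne by (simp add: x'_def w'_def)
      moreover have "D x' (bb(K:=a)) \<le> D x' w'" using step.IH x'P w'P cx xc wc by blast
      moreover have "D x (bb(K:=a)) \<le> D x x' + D x' (bb(K:=a))" by (rule D_tri)
      ultimately show "D x (bb(K:=a)) \<le> D x w" using D_nonneg[of w' w] by linarith
    qed
  qed
  thus ?thesis using M xc wc by blast
qed

lemma TipLeaf:
  assumes sp: "spike K bb r" and M: "Suc K \<le> M" and x: "x \<in> P M"
    and pre: "\<forall>i<K. x i = bb i" and xr: "x K = r"
  shows "x = bb(K := r)"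
  using M x pre xr
proof (induction M arbitrary: x rule: dec_induct)
  case base
  have e: "x = bb(K := x K)" using spike_pt(1)[OF sp base.prems(1,2)] .
  show ?case by (subst e) (simp add: base.prems(3))
next
  case (step M)
  have M1: "M \<ge> 1" using step.hyps by simp
  define x' where "x' = x(M:=0)"
  have x'P: "x' \<in> P M" using trunc1[OF M1 step.prems(1)] by (simp add: x'_def)
  have p1: "\<forall>i<K. x' i = bb i" using step.prems(2) step.hyps by (simp add: x'_def)
  have p2: "x' K = r" using step.prems(3) step.hyps by (simp add: x'_def)
  have "x' = bb(K := r)" using step.IH[OF x'P p1 p2] .
  show ?case
  proof (cases "x M = 0")
    case True
    hence "x = x'" by (auto simp: x'_def)
    thus ?thesis using \<open>x' = bb(K := r)\<close> by simp
  next
    case False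
    then obtain n where n: "n \<ge> 1" "x' = q M n" using hgt[OF M1 step.prems(1)] by (auto simp: x'_def)
    have "bb(K := r) \<in> L (Suc K)" using sp by (simp add: spike_def)
    hence "bb(K := r) \<in> L M" using L_mono[of "Suc K" M] step.hyps by auto
    thus ?thesis using qL[OF M1 n(1)] n(2) \<open>x' = bb(K := r)\<close> by simp
  qed
qed

end


lemma geo_sum:
  fixes T N :: nat
  defines "h \<equiv> (\<lambda>m::nat. if m \<le> T then (1/2::real)^N else (1/2)^(m+1))"
  shows "(\<Sum>m<M. h m) = real (min M (T+1)) * (1/2)^N + ((1/2)^(T+1) - (1/2)^(max M (T+1)))"
proof (induction M)
  case 0 thus ?case by simp
next
  case (Suc M)
  show ?case
  proof (cases "M \<le> T")
    case True
    have "min (Suc M) (T+1) = Suc (min M (T+1))" "max (Suc M) (T+1) = max M (T+1)" using True by auto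
    thus ?thesis using Suc True by (simp add: h_def algebra_simps)
  next
    case False
    have e: "min (Suc M) (T+1) = min M (T+1)" "max (Suc M) (T+1) = Suc M" "max M (T+1) = M" using False by auto
    have "(1/2::real)^M = 2 * (1/2)^(Suc M)" by simp
    thus ?thesis using Suc False e by (simp add: h_def algebra_simps)
  qed
qed

lemma geo_bound:
  fixes T N :: nat
  shows "(\<Sum>m<M. if m \<le> T then (1/2::real)^N else (1/2)^(m+1)) \<le> (real T + 1) * (1/2)^N + (1/2)^(T+1)"
proof -
  have "(\<Sum>m<M. if m \<le> T then (1/2::real)^N else (1/2)^(m+1)) =
        real (min M (T+1)) * (1/2)^N + ((1/2)^(T+1) - (1/2)^(max M (T+1)))"
    using geo_sum[of T N M] by simp
  moreover have "real (min M (T+1)) \<le> real T + 1" by simp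
  moreover have "(0::real) \<le> (1/2)^(max M (T+1))" by simp
  ultimately show ?thesis
    by (smt (verit) mult_right_mono zero_le_power zero_le_divide_1_iff)
qed

context cst begin

lemma T2:
  assumes sp: "spike K bb r" and e: "\<epsilon> > 0"
  shows "\<exists>a0. 0 \<le> a0 \<and> a0 < r \<and> r - a0 \<le> \<epsilon> \<and>
     (\<forall>a x. a0 \<le> a \<longrightarrow> x \<in> Desc K bb a \<longrightarrow> D x (bb(K:=r)) \<le> \<epsilon>)"
proof -
  have r: "r > 0" using sp by (simp add: spike_def)
  obtain T :: nat where T: "(1/2::real)^T < \<epsilon>/3" using real_arch_pow_inv[of "\<epsilon>/3" "1/2"] e by auto
  have T': "(1/2::real)^(T+1) \<le> \<epsilon>/3" using T by (smt (verit) power_decreasing le_add1 zero_le_divide_1_iff divide_le_eq_1)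
  obtain N :: nat where N: "(1/2::real)^N < (\<epsilon>/3) / (real T + 1)"
    using real_arch_pow_inv[of "(\<epsilon>/3) / (real T + 1)" "1/2"] e by auto
  have N': "(real T + 1) * (1/2::real)^N \<le> \<epsilon>/3"
    using N by (simp add: field_simps)
  define Bad where "Bad = {Suc K..T} \<times> {1..<N}"
  define V where "V = (\<lambda>(m,n). q m n K) ` {mn \<in> Bad. (\<forall>i<K. q (fst mn) (snd mn) i = bb i) \<and> q (fst mn) (snd mn) K < r}"
  have finV: "finite V" unfolding V_def Bad_def by simp
  define a0 where "a0 = Max (insert (max 0 (r - \<epsilon>/3)) V)"
  have a0ge: "max 0 (r - \<epsilon>/3) \<le> a0" unfolding a0_def using finV by (intro Max_ge) auto
  have Vle: "v \<le> a0" if "v \<in> V" for v unfolding a0_def using finV that by (intro Max_ge) auto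
  have Vlt: "v < r" if "v \<in> V" for v using that by (auto simp: V_def)
  have a0lt: "a0 < r" unfolding a0_def using finV Vlt r e by (subst Max_less_iff) auto
  have main: "D x (bb(K:=r)) \<le> \<epsilon>" if a: "a0 \<le> a" and x: "x \<in> Desc K bb a" for a x
  proof -
    have xPP: "x \<in> PP" and pre: "\<forall>i<K. x i = bb i" and xa: "x K > a" using x by (auto simp: Desc_def)
    obtain M where M: "M \<ge> Suc K" "x \<in> P M" using common_level[OF xPP xPP] by blast
    define X where "X = x K"
    define t where "t = tr (Suc K) x"
    have tP: "t \<in> P (Suc K)" unfolding t_def using tr_P[of "Suc K" M x] M by simp
    have tpre: "\<forall>i<K. t i = bb i" using pre by (simp add: t_def tr_def)
    have tK: "t K = X" by (simp add: t_def tr_def X_def)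
    have te0: "t = bb(K := t K)" by (rule spike_pt(1)[OF sp tP tpre])
    have te: "t = bb(K := X)" using te0 by (simp only: tK)
    have Xr: "X \<in> {0..r}" using spike_pt(2)[OF sp tP tpre] by (simp only: tK)
    have rr: "r \<in> {0..r}" using r by simp
    have Dtr: "D t (bb(K:=r)) \<le> \<epsilon>/3"
    proof -
      have "D t (bb(K:=r)) = theta_r r X r" unfolding te using spike_D[OF sp Xr rr] .
      also have "\<dots> \<le> \<bar>X - r\<bar>" using th_basic(1)[OF r, of X r] Xr by simp
      also have "\<dots> \<le> r - a" using Xr xa by (simp add: X_def)
      finally show ?thesis using a a0ge by linarith
    qed
    define h where "h = (\<lambda>m::nat. if m \<le> T then (1/2::real)^N else (1/2)^(m+1))"
    have hnn: "0 \<le> h m" for m by (simp add: h_def)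
    have trm: "x m \<le> h m" if m: "m \<in> {Suc K..<M}" for m
    proof -
      have m1: "1 \<le> m" "m < M" using m by auto
      note cd = coord[OF m1 M(2)]
      show ?thesis
      proof (cases "m \<le> T")
        case False thus ?thesis using cd by (simp add: h_def)
      next
        case True
        show ?thesis
        proof (cases "x m = 0")
          case True thus ?thesis using hnn[of m] by simp
        next
          case False
          then obtain n where n: "n \<ge> 1" "tr m x = q m n" "x m \<le> rad m n" using cd by blast
          have "N \<le> n"
          proof (rule ccontr)
            assume "\<not> N \<le> n"
            hence inB: "(m, n) \<in> Bad" using n(1) m \<open>m \<le> T\<close> by (auto simp: Bad_def)
            have qpre: "\<forall>i<K. q m n i = bb i"
            proof (intro allI impI)
              fix i assume "i < K"
              hence "tr m x i = x i" using m by (simp add: tr_def)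
              thus "q m n i = bb i" using n(2) pre \<open>i < K\<close> by simp
            qed
            have qK: "q m n K = X"
            proof -
              have "tr m x K = x K" using m by (simp add: tr_def)
              thus ?thesis using n(2) by (simp add: X_def)
            qed
            show False
            proof (cases "X < r")
              case True
              hence "X \<in> V" unfolding V_def using inB qpre qK by force
              hence "X \<le> a0" by (rule Vle)
              thus False using xa a by (simp add: X_def)
            next
              case False
              hence Xr': "X = r" using Xr by simp
              have qmP: "q m n \<in> P m" using qP[OF m1(1) n(1)] .
              have "q m n = bb(K := r)" using TipLeaf[OF sp _ qmP qpre] m qK Xr' by simp
              moreover have "bb(K := r) \<in> L m"
                using sp L_mono[of "Suc K" m] m by (auto simp: spike_def)
              ultimately show False using qL[OF m1(1) n(1)] by simp
            qed
          qed
          hence "rad m n \<le> (1/2)^N" unfolding rad_def by (intro power_decreasing) auto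
          thus ?thesis using n(3) True by (simp add: h_def)
        qed
      qed
    qed
    have "(\<Sum>m\<in>{Suc K..<M}. x m) \<le> (\<Sum>m\<in>{Suc K..<M}. h m)" using trm by (intro sum_mono) auto
    also have "\<dots> \<le> (\<Sum>m<M. h m)" using hnn by (intro sum_mono2) auto
    also have "\<dots> \<le> (real T + 1) * (1/2)^N + (1/2)^(T+1)" unfolding h_def by (rule geo_bound)
    finally have S: "(\<Sum>m\<in>{Suc K..<M}. x m) \<le> 2 * \<epsilon> / 3" using N' T' by linarith
    have "D x t \<le> (\<Sum>m\<in>{Suc K..<M}. x m)" unfolding t_def using chain[OF M] .
    moreover have "D x (bb(K:=r)) \<le> D x t + D t (bb(K:=r))" by (rule D_tri)
    ultimately show ?thesis using S Dtr by linarith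
  qed
  show ?thesis
  proof (intro exI conjI allI impI)
    show "0 \<le> a0" "a0 < r" "r - a0 \<le> \<epsilon>" using a0ge a0lt e by auto
  qed (use main in blast)
qed

end


context cst begin

lemma tip_exists:
  assumes M: "M \<ge> 1" "x \<in> P M" and e: "\<epsilon> > 0"
  shows "\<exists>K bb r. spike K bb r \<and> D x (bb(K:=r)) < \<epsilon>"
proof (cases "x \<in> L M")
  case True
  from L_form[OF M(1) True] show ?thesis
  proof
    assume "x = e0"
    hence "x = (\<lambda>_. 0)(0 := 1)" by (auto simp: e0_def fun_eq_iff)
    thus ?thesis using spike0 e by (metis D_self)
  next
    assume "\<exists>m n. 1 \<le> m \<and> m < M \<and> n \<ge> 1 \<and> x = (q m n)(m := rad m n)"
    then obtain m n where "1 \<le> m" "n \<ge> 1" "x = (q m n)(m := rad m n)" by blast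
    thus ?thesis using spikeK e by (metis D_self)
  qed
next
  case False
  have M1: "Suc M \<ge> 1" by simp
  obtain n1 where n1: "n1 \<ge> 1" "\<rho> M x (q M n1) < \<epsilon>/4" using dens[OF M(1) M(2) False, of "\<epsilon>/4"] e by auto
  have Dxq: "D x (q M n1) < \<epsilon>/4" using n1 D_rho[OF M(1) M(2) qP[OF M(1) n1(1)]] by simp
  define c where "c = min (rad M n1) (\<epsilon>/4)"
  have c0: "c > 0" using rad_pos[of M n1] e by (simp add: c_def)
  define Z where "Z = range (\<lambda>n. q (Suc M) n M)"
  have "countable Z" unfolding Z_def by simp
  moreover have "uncountable {0<..<c}" using c0 by (simp add: uncountable_open_interval)
  ultimately obtain y where y: "y \<in> {0<..<c}" "y \<notin> Z"
    by (metis countable_subset subsetI)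
  have yr: "y \<in> {0..rad M n1}" "y > 0" "y < rad M n1" "y < \<epsilon>/4" using y by (auto simp: c_def)
  define x' where "x' = (q M n1)(M := y)"
  have x'P: "x' \<in> P (Suc M)" unfolding x'_def using Pstep[OF M(1)] n1(1) yr(1) by blast
  have x'0: "x'(M := 0) = q M n1" unfolding x'_def using sp0[OF M(1) n1(1)] .
  have r0: "(0::real) \<in> {0..rad M n1}" using rad_pos[of M n1] by simp
  have Dx'q: "D x' (q M n1) = theta_r (rad M n1) y 0"
  proof -
    have "D x' (q M n1) = D ((q M n1)(M := y)) ((q M n1)(M := 0))" using qk0[OF M(1) n1(1)] by (simp add: x'_def)
    also have "\<dots> = theta_r (rad M n1) y 0" using SpD[OF M(1) n1(1) yr(1) r0] .
    finally show ?thesis .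
  qed
  have Dx'q_lt: "D x' (q M n1) < \<epsilon>/4"
    using Dx'q th_basic(1)[OF rad_pos, of y M n1 0] yr r0 by simp
  have x'L: "x' \<notin> L (Suc M)"
  proof
    assume "x' \<in> L (Suc M)"
    hence "x' \<in> L M \<or> (\<exists>n\<ge>1. x' = (q M n)(M := rad M n))" using Lstep[OF M(1)] by auto
    thus False
    proof
      assume "x' \<in> L M"
      hence "x' \<in> P M" using L_sub_P[OF M(1)] by auto
      hence "x' M = 0" using vanish[OF M(1)] by simp
      thus False using yr by (simp add: x'_def)
    next
      assume "\<exists>n\<ge>1. x' = (q M n)(M := rad M n)"
      then obtain n where n: "n \<ge> 1" "x' = (q M n)(M := rad M n)" by auto
      have "q M n = q M n1" using arg_cong[OF n(2), of "\<lambda>f. f(M := 0)"] x'0 sp0[OF M(1) n(1)] by simp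
      hence "n = n1" using qinj[OF M(1) n(1) n1(1)] by simp
      moreover have "y = rad M n" using arg_cong[OF n(2), of "\<lambda>f. f M"] by (simp add: x'_def)
      ultimately show False using yr by simp
    qed
  qed
  have pos: "D x' w > 0" if w: "w \<in> P (Suc M)" "w \<noteq> x'" for w
  proof (cases "w(M:=0) = q M n1")
    case False
    hence ne: "x'(M:=0) \<noteq> w(M:=0)" using x'0 by simp
    have "D x' w = D x' (x'(M:=0)) + D (x'(M:=0)) (w(M:=0)) + D (w(M:=0)) w" using Par[OF M(1) x'P w(1) ne] .
    moreover have "D x' (x'(M:=0)) > 0"
      using Dx'q x'0 th_basic(2)[OF rad_pos, of y M n1 0] yr r0 by simp
    ultimately show ?thesis using D_nonneg[of "x'(M:=0)" "w(M:=0)"] D_nonneg[of "w(M:=0)" w] by linarith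
  next
    case True
    from shape[OF M(1) w(1)] show ?thesis
    proof
      assume wb: "w \<in> P M \<and> w \<notin> q M ` {1..} \<and> w M = 0"
      hence "w = w(M:=0)" by auto
      hence "w = q M n1" using True by simp
      thus ?thesis using wb n1(1) by auto
    next
      assume "\<exists>n\<ge>1. w = (q M n)(M := w M) \<and> w M \<in> {0..rad M n}"
      then obtain n where n: "n \<ge> 1" "w = (q M n)(M := w M)" "w M \<in> {0..rad M n}" by auto
      define W where "W = w M"
      have we: "w = (q M n)(M := W)" using n(2) by (simp only: W_def[symmetric])
      have "q M n = q M n1" using arg_cong[OF we, of "\<lambda>f. f(M := 0)"] True sp0[OF M(1) n(1)] by simp
      hence nn: "n = n1" using qinj[OF M(1) n(1) n1(1)] by simp
      have we': "w = (q M n1)(M := W)" using we nn by simp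
      have W: "W \<in> {0..rad M n1}" using n(3) nn by (simp add: W_def)
      have Wy: "W \<noteq> y" using w(2) we' by (auto simp: x'_def)
      have "D x' w = theta_r (rad M n1) y W" unfolding we' x'_def using SpD[OF M(1) n1(1) yr(1) W] .
      moreover have "\<bar>y - W\<bar>/2 \<le> theta_r (rad M n1) y W" using th_basic(2)[OF rad_pos, of y M n1 W] yr W by simp
      moreover have "\<bar>y - W\<bar> > 0" using Wy by simp
      ultimately show ?thesis by argo
    qed
  qed
  have qpos: "D x' (q (Suc M) n) > 0" if n: "n \<ge> 1" for n
  proof (rule pos)
    show "q (Suc M) n \<in> P (Suc M)" using qP[OF M1 n] .
    have "q (Suc M) n M \<in> Z" by (simp add: Z_def)
    thus "q (Suc M) n \<noteq> x'" using y(2) by (auto simp: x'_def)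
  qed
  obtain N0 :: nat where N0: "(1/2::real)^N0 < \<epsilon>/4" using real_arch_pow_inv[of "\<epsilon>/4" "1/2"] e by auto
  define \<delta> where "\<delta> = Min (insert (\<epsilon>/4) ((\<lambda>n. D x' (q (Suc M) n)) ` {1..<N0}))"
  have \<delta>0: "\<delta> > 0" unfolding \<delta>_def using e qpos by (subst Min_gr_iff) auto
  have \<delta>le: "\<delta> \<le> D x' (q (Suc M) n)" if "n \<in> {1..<N0}" for n
    unfolding \<delta>_def using that by (intro Min_le) auto
  have \<delta>le': "\<delta> \<le> \<epsilon>/4" unfolding \<delta>_def by (intro Min_le) auto
  obtain n where n: "n \<ge> 1" "\<rho> (Suc M) x' (q (Suc M) n) < \<delta>" using dens[OF M1 x'P x'L \<delta>0] by auto
  have Dn: "D x' (q (Suc M) n) < \<delta>" using n D_rho[OF M1 x'P qP[OF M1 n(1)]] by simp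
  have nN: "N0 \<le> n" using \<delta>le[of n] Dn n(1) by (cases "n < N0") auto
  have r0': "(0::real) \<in> {0..rad (Suc M) n}" and rr': "rad (Suc M) n \<in> {0..rad (Suc M) n}"
    using rad_pos[of "Suc M" n] by auto
  have Dtip: "D (q (Suc M) n) ((q (Suc M) n)(Suc M := rad (Suc M) n)) < \<epsilon>/4"
  proof -
    have "D (q (Suc M) n) ((q (Suc M) n)(Suc M := rad (Suc M) n))
        = D ((q (Suc M) n)(Suc M := 0)) ((q (Suc M) n)(Suc M := rad (Suc M) n))" using qk0[OF M1 n(1)] by simp
    also have "\<dots> = theta_r (rad (Suc M) n) 0 (rad (Suc M) n)" using SpD[OF M1 n(1) r0' rr'] .
    also have "\<dots> \<le> \<bar>0 - rad (Suc M) n\<bar>" using th_basic(1)[OF rad_pos, of 0 "Suc M" n "rad (Suc M) n"] rr' by simp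
    also have "\<dots> = (1/2)^(n + Suc M)" by (simp add: rad_def)
    also have "\<dots> \<le> (1/2)^N0" using nN by (intro power_decreasing) auto
    finally show ?thesis using N0 by linarith
  qed
  have "D x ((q (Suc M) n)(Suc M := rad (Suc M) n)) \<le>
        D x (q M n1) + D (q M n1) x' + D x' (q (Suc M) n) + D (q (Suc M) n) ((q (Suc M) n)(Suc M := rad (Suc M) n))"
    using D_tri[where x=x and y="q M n1" and z="(q (Suc M) n)(Suc M := rad (Suc M) n)"]
      D_tri[where x="q M n1" and y=x' and z="(q (Suc M) n)(Suc M := rad (Suc M) n)"]
      D_tri[where x=x' and y="q (Suc M) n" and z="(q (Suc M) n)(Suc M := rad (Suc M) n)"] by linarith
  moreover have "D (q M n1) x' < \<epsilon>/4" using Dx'q_lt D_sym by simp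
  ultimately have "D x ((q (Suc M) n)(Suc M := rad (Suc M) n)) < \<epsilon>"
    using Dxq Dn \<delta>le' Dtip by linarith
  thus ?thesis using spikeK[OF M1 n(1)] by blast
qed

end


lemma Limsup_seq_lower:
  fixes f :: "'a::metric_space \<Rightarrow> ereal" and X :: "nat \<Rightarrow> 'a"
  assumes lim: "X \<longlonglongrightarrow> p" and XS: "\<And>n. X n \<in> S" and Xp: "\<And>n. X n \<noteq> p" and b: "\<And>n. \<beta> \<le> f (X n)"
  shows "at p within S \<noteq> bot" "\<beta> \<le> Limsup (at p within S) f"
proof -
  have fl: "filterlim X (at p within S) sequentially" using lim XS Xp by (intro filterlim_at_withinI) auto
  show "at p within S \<noteq> bot"
  proof
    assume "at p within S = bot"
    hence "eventually (\<lambda>_. False) (at p within S)" by simp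
    hence "eventually (\<lambda>n. False) sequentially" using eventually_compose_filterlim[OF _ fl] by blast
    thus False by simp
  qed
  show "\<beta> \<le> Limsup (at p within S) f" unfolding Limsup_def
  proof (rule INF_greatest)
    fix P assume "P \<in> {P. eventually P (at p within S)}"
    hence "eventually (\<lambda>n. P (X n)) sequentially" using eventually_compose_filterlim[OF _ fl] by blast
    then obtain N where "\<forall>n\<ge>N. P (X n)" unfolding eventually_sequentially by blast
    hence "P (X N)" by simp
    hence "f (X N) \<le> (SUP x\<in>Collect P. f x)" by (intro SUP_upper) auto
    thus "\<beta> \<le> (SUP x\<in>Collect P. f x)" using b[of N] by (rule order_trans[rotated])
  qed
qed

lemma slope_upper:
  fixes u :: "'a::metric_space \<Rightarrow> real"
  assumes e: "e > 0" and L: "L \<ge> 0"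
    and h: "\<And>x. x \<in> S \<Longrightarrow> x \<noteq> w \<Longrightarrow> dist x w < e \<Longrightarrow> u w \<le> u x + L * dist w x"
  shows "local_slope S u w \<le> ereal L"
proof (cases "at w within S = bot")
  case True thus ?thesis using L by (simp add: local_slope_def)
next
  case False
  have "eventually (\<lambda>x. ereal (max (u w - u x) 0 / dist w x) \<le> ereal L) (at w within S)"
    unfolding eventually_at
  proof (intro exI conjI ballI impI)
    show "e > 0" by fact
    fix x assume x: "x \<in> S" "x \<noteq> w \<and> dist x w < e"
    have d: "dist w x > 0" using x by auto
    have "max (u w - u x) 0 \<le> L * dist w x" using h[OF x(1)] x L d by auto
    hence "max (u w - u x) 0 / dist w x \<le> L" using d by (simp add: divide_le_eq)
    thus "ereal (max (u w - u x) 0 / dist w x) \<le> ereal L" by simp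
  qed
  hence "Limsup (at w within S) (\<lambda>x. ereal (max (u w - u x) 0 / dist w x)) \<le> ereal L"
    by (rule Limsup_bounded)
  thus ?thesis using False by (simp add: local_slope_def)
qed

locale cstc = cst P \<rho> L q j for P \<rho> L q and j :: "(nat \<Rightarrow> real) \<Rightarrow> 'a::complete_space" +
  assumes dense: "closure (j ` (\<Union>k\<in>{1::nat..}. P k)) = UNIV"
begin

lemma PP_eq: "(\<Union>k\<in>{1::nat..}. P k) = PP"
  by (auto simp: PP_def)

lemma approx: "\<eta> > 0 \<Longrightarrow> \<exists>v\<in>PP. dist (j v) z < \<eta>"
proof -
  assume "\<eta> > 0"
  have "z \<in> closure (j ` PP)" using dense PP_eq by simp
  thus ?thesis using \<open>\<eta> > 0\<close> unfolding closure_approachable by blast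
qed

lemma open_part:
  assumes sp: "spike K bb r" and a: "0 \<le> a" "a \<le> r"
    and w: "w \<in> closure (j ` Desc K bb a)" and e: "e = dist w (j (bb(K:=a)))" and e0: "e > 0"
  shows "ball w (e/3) \<subseteq> closure (j ` Desc K bb a)"
proof
  fix z assume z: "z \<in> ball w (e/3)"
  show "z \<in> closure (j ` Desc K bb a)" unfolding closure_approachable
  proof (intro allI impI)
    fix \<eta> :: real assume \<eta>: "\<eta> > 0"
    define \<eta>' where "\<eta>' = min \<eta> (e/6)"
    have \<eta>'0: "\<eta>' > 0" using \<eta> e0 by (simp add: \<eta>'_def)
    obtain v where v: "v \<in> PP" "dist (j v) z < \<eta>'" using approx[OF \<eta>'0] by blast
    obtain y where y: "y \<in> j ` Desc K bb a" "dist y w < \<eta>'" using w \<eta>'0 unfolding closure_approachable by blast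
    then obtain x where x: "x \<in> Desc K bb a" "y = j x" by auto
    have "v \<in> Desc K bb a"
    proof (rule ccontr)
      assume nv: "v \<notin> Desc K bb a"
      have "D x (bb(K:=a)) \<le> D x v" using T1[OF sp a x(1) v(1) nv] .
      moreover have "D x (bb(K:=a)) \<ge> e - \<eta>'"
        using dist_triangle[of w "j (bb(K:=a))" "j x"] y x e by (simp add: D_def dist_commute)
      moreover have "D x v < \<eta>' + e/3 + \<eta>'"
      proof -
        have "D x v \<le> dist (j x) w + dist w z + dist z (j v)"
          unfolding D_def by (metis dist_triangle add.commute add_le_cancel_left order_trans)
        thus ?thesis using y x z v by (simp add: dist_commute)
      qed
      moreover have "\<eta>' \<le> e/6" by (simp add: \<eta>'_def)
      ultimately show False using e0 by (linarith | argo)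
    qed
    moreover have "dist (j v) z < \<eta>" using v \<eta> by (simp add: \<eta>'_def)
    ultimately show "\<exists>y\<in>j ` Desc K bb a. dist y z < \<eta>" by blast
  qed
qed

lemma step_ineq:
  fixes \<Omega> :: "'a set" and u l :: "'a \<Rightarrow> real"
  assumes sp: "spike K bb r"
    and ballO: "ball (j (bb(K:=r))) d0 \<subseteq> \<Omega>"
    and ub: "\<And>z. z \<in> ball (j (bb(K:=r))) d0 \<Longrightarrow> u z \<ge> u (j (bb(K:=r))) - 1"
    and uc: "continuous_on (closure \<Omega>) u"
    and slope: "\<forall>x\<in>\<Omega>. local_slope (closure \<Omega>) u x = ereal (l x)"
    and lc: "\<And>x. x \<in> \<Omega> \<Longrightarrow> l x \<ge> c" and lam: "0 < lam" "lam < c"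
    and small: "\<And>x. x \<in> Desc K bb a \<Longrightarrow> D x (bb(K:=r)) \<le> d0/4"
    and a: "0 \<le> a" "a < b" "b \<le> r" "r - a \<le> d0/4" and d0: "d0 > 0"
  shows "u (j (bb(K:=a))) + lam * theta_r r a b \<le> u (j (bb(K:=b)))"
proof -
  define p where "p = j (bb(K:=r))"
  have r: "r > 0" using sp by (simp add: spike_def)
  define F where "F = closure (j ` Desc K bb a) \<union> {j (bb(K:=a))}"
  have clF: "closed F" unfolding F_def by (intro closed_Un closed_closure closed_singleton)
  have ar: "a \<in> {0..r}" "b \<in> {0..r}" "r \<in> {0..r}" using a r by auto
  have Fc: "F \<subseteq> cball p (d0/4)"
  proof -
    have "j ` Desc K bb a \<subseteq> cball p (d0/4)"
    proof
      fix y assume "y \<in> j ` Desc K bb a"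
      then obtain x where "x \<in> Desc K bb a" "y = j x" by auto
      thus "y \<in> cball p (d0/4)" using small[of x] by (simp add: D_def p_def dist_commute)
    qed
    hence "closure (j ` Desc K bb a) \<subseteq> cball p (d0/4)" by (intro closure_minimal) auto
    moreover have "dist p (j (bb(K:=a))) \<le> d0/4"
    proof -
      have "dist p (j (bb(K:=a))) = theta_r r a r" using spike_D[OF sp ar(1) ar(3)]
        by (simp add: p_def D_def dist_commute)
      also have "\<dots> \<le> \<bar>a - r\<bar>" using th_basic(1)[OF r, of a r] a by simp
      finally show ?thesis using a by simp
    qed
    ultimately show ?thesis by (auto simp: F_def)
  qed
  have FB: "F \<subseteq> ball p d0" using Fc d0 by auto
  have FO: "F \<subseteq> \<Omega>" using FB ballO by (auto simp: p_def)
  have bD: "bb(K:=b) \<in> Desc K bb a"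
  proof -
    have "bb(K:=b) \<in> P (Suc K)" using sp ar(2) by (simp add: spike_def)
    hence "bb(K:=b) \<in> PP" by (auto simp: PP_def)
    thus ?thesis using a by (simp add: Desc_def)
  qed
  have "j (bb(K:=b)) \<in> j ` Desc K bb a" using bD by blast
  hence bF: "j (bb(K:=b)) \<in> F" using closure_subset[of "j ` Desc K bb a"] by (auto simp: F_def)
  have "F \<subseteq> closure \<Omega>" using FO closure_subset[of \<Omega>] by blast
  hence ucF: "continuous_on F u" using uc by (intro continuous_on_subset[OF uc])
  have lbF: "\<And>x. x \<in> F \<Longrightarrow> u x \<ge> u p - 1" using FB ub by (auto simp: p_def)
  obtain w where wF: "w \<in> F" and w1: "u w + lam * dist (j (bb(K:=b))) w \<le> u (j (bb(K:=b)))"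
    and w2: "\<forall>x\<in>F. u w \<le> u x + lam * dist w x"
    using ekeland_weak[OF clF bF ucF lbF lam(1)] by blast
  show ?thesis
  proof (cases "w = j (bb(K:=a))")
    case True
    have "dist (j (bb(K:=b))) w = theta_r r b a" using spike_D[OF sp ar(2) ar(1)] True by (simp add: D_def)
    also have "\<dots> = theta_r r a b" using th_basic(3)[OF r, of b a] ar by simp
    finally show ?thesis using w1 True by simp
  next
    case False
    hence wcl: "w \<in> closure (j ` Desc K bb a)" using wF by (auto simp: F_def)
    define e where "e = dist w (j (bb(K:=a)))"
    have e0: "e > 0" using False by (simp add: e_def)
    have ball: "ball w (e/3) \<subseteq> F" using open_part[OF sp a(1) _ wcl e_def e0] a by (auto simp: F_def)
    have wO: "w \<in> \<Omega>" using wF FO by auto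
    have "local_slope (closure \<Omega>) u w \<le> ereal lam"
    proof (rule slope_upper)
      show "e/3 > 0" using e0 by simp
      show "lam \<ge> 0" using lam by simp
      fix x assume "x \<in> closure \<Omega>" "x \<noteq> w" "dist x w < e/3"
      hence "x \<in> F" using ball by (auto simp: dist_commute)
      thus "u w \<le> u x + lam * dist w x" using w2 by blast
    qed
    moreover have "local_slope (closure \<Omega>) u w = ereal (l w)" using slope wO by blast
    ultimately have "l w \<le> lam" by simp
    thus ?thesis using lc[OF wO] lam by simp
  qed
qed

lemma tip_contra:
  fixes \<Omega> :: "'a set" and u l :: "'a \<Rightarrow> real"
  assumes sp: "spike K bb r" and Oo: "open \<Omega>" and pO: "j (bb(K:=r)) \<in> \<Omega>"
    and c: "c > 0" and lc: "\<And>x. x \<in> \<Omega> \<Longrightarrow> l x \<ge> c" and lp: "l (j (bb(K:=r))) < 2*c"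
    and uc: "continuous_on (closure \<Omega>) u"
    and slope: "\<forall>x\<in>\<Omega>. local_slope (closure \<Omega>) u x = ereal (l x)"
  shows False
proof -
  define p where "p = j (bb(K:=r))"
  have r: "r > 0" using sp by (simp add: spike_def)
  have rr: "r \<in> {0..r}" using r by simp
  obtain e1 where e1: "e1 > 0" "ball p e1 \<subseteq> \<Omega>" using Oo pO unfolding open_contains_ball p_def by blast
  have pc: "p \<in> closure \<Omega>" using pO closure_subset by (auto simp: p_def)
  obtain e2 where e2: "e2 > 0" "\<forall>x'\<in>closure \<Omega>. dist x' p < e2 \<longrightarrow> dist (u x') (u p) < 1"
    using uc pc unfolding continuous_on_iff by (meson zero_less_one)
  define d0 where "d0 = min e1 e2"
  have d0: "d0 > 0" using e1 e2 by (simp add: d0_def)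
  have ballO: "ball p d0 \<subseteq> \<Omega>" using e1 by (auto simp: d0_def)
  have ub: "u z \<ge> u p - 1" if "z \<in> ball p d0" for z
  proof -
    have "z \<in> \<Omega>" using that ballO by auto
    hence "z \<in> closure \<Omega>" using closure_subset[of \<Omega>] by blast
    moreover have "dist z p < e2" using that by (simp add: d0_def dist_commute)
    ultimately have "dist (u z) (u p) < 1" using e2 by blast
    thus ?thesis by (simp add: dist_real_def)
  qed
  obtain a0 where a0: "0 \<le> a0" "a0 < r" "r - a0 \<le> d0/4"
    and sm: "\<And>a x. a0 \<le> a \<Longrightarrow> x \<in> Desc K bb a \<Longrightarrow> D x (bb(K:=r)) \<le> d0/4"
    using T2[OF sp, of "d0/4"] d0 by auto
  define lam where "lam = (c + l p / 2) / 2"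
  have lpc: "l p \<ge> c" using lc pO by (simp add: p_def)
  have lam0: "lam > 0" "lam < c" "2 * lam > l p" using lpc c lp by (auto simp: lam_def p_def)
  have stepI: "u (j (bb(K:=a))) + lam * theta_r r a b \<le> u (j (bb(K:=b)))"
    if "a0 \<le> a" "a < b" "b \<le> r" for a b
    using step_ineq[OF sp _ _ uc slope lc lam0(1) lam0(2), of d0 a b] ballO ub sm[of a] that a0 d0
    by (simp add: p_def)
  obtain N1 :: nat where N1: "N1 \<ge> 1" "a0 \<le> r * stp N1"
  proof -
    have "a0 / r < 1" using a0 r by simp
    hence "eventually (\<lambda>N. a0 / r < stp N) sequentially" using stp_tendsto order_tendstoD(1) by blast
    then obtain N where "\<forall>n\<ge>N. a0 / r < stp n" unfolding eventually_sequentially by blast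
    hence "a0 / r < stp (max N 1)" by simp
    hence "a0 \<le> r * stp (max N 1)" using r by (simp add: field_simps)
    thus ?thesis using that[of "max N 1"] by simp
  qed
  have stp1: "stp n < 1" for n by (simp add: stp_def)
  have chainI: "u (j (bb(K := r * stp N))) + lam * (r * stp (N + k) - r * stp N) \<le> u (j (bb(K := r * stp (N + k))))"
    if N: "N \<ge> N1" for N k
  proof (induction k)
    case 0 thus ?case by simp
  next
    case (Suc k)
    define N' where "N' = N + k"
    have N'1: "N' \<ge> 1" using N N1 by (simp add: N'_def)
    have a1: "a0 \<le> r * stp N'" using N1(2) stp_mono[of N1 N'] N r by (smt (verit) N'_def le_add1 mult_left_mono order_trans)
    have m1: "r * stp N' < r * mdp N'" "r * mdp N' < r * stp (Suc N')" using mdp_facts[OF N'1] r by simp_all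
    have a2: "r * stp (Suc N') \<le> r" using stp1[of "Suc N'"] r by simp
    have s1: "u (j (bb(K := r * stp N'))) + lam * (r * mdp N' - r * stp N') \<le> u (j (bb(K := r * mdp N')))"
      using stepI[OF a1 m1(1)] m1 a2 th_kinks(1)[OF r N'1] by simp
    have s2: "u (j (bb(K := r * mdp N'))) + lam * (r * stp (Suc N') - r * mdp N') \<le> u (j (bb(K := r * stp (Suc N'))))"
      using stepI[of "r * mdp N'" "r * stp (Suc N')"] a1 m1 a2 th_kinks(2)[OF r N'1] by simp
    have eq: "lam * (r * stp (Suc N') - r * stp N) = lam * (r * stp N' - r * stp N) + lam * (r * mdp N' - r * stp N')
        + lam * (r * stp (Suc N') - r * mdp N')" by (simp add: algebra_simps)
    have e: "N + Suc k = Suc N'" by (simp add: N'_def)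
    have IH: "u (j (bb(K := r * stp N))) + lam * (r * stp N' - r * stp N) \<le> u (j (bb(K := r * stp N')))"
      using Suc.IH unfolding N'_def .
    show ?case unfolding e using IH s1 s2 eq by linarith
  qed
  obtain k :: nat where k: "(1/2::real)^k < (2 * lam - l p) / (2 * lam)"
    using real_arch_pow_inv[of "(2 * lam - l p) / (2 * lam)" "1/2"] lam0 by auto
  define \<beta> where "\<beta> = 2 * lam * (1 - (1/2)^k)"
  have \<beta>: "\<beta> > l p"
  proof -
    have "2 * lam * (1/2)^k < 2 * lam - l p" using k lam0 by (simp add: field_simps)
    thus ?thesis by (simp add: \<beta>_def algebra_simps)
  qed
  define X where "X n = j (bb(K := r * stp (n + N1)))" for n
  have Xdist: "dist p (X n) = r * (1 - stp (n + N1)) / 2" for n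
  proof -
    have N: "n + N1 \<ge> 1" using N1 by simp
    have s: "r * stp (n + N1) \<in> {0..r}" using stp_facts[OF N] r stp1[of "n + N1"] by simp
    have "dist p (X n) = theta_r r (r * stp (n + N1)) r"
      using spike_D[OF sp s rr] th_basic(3)[OF r, of r "r * stp (n + N1)"] s
      by (simp add: p_def X_def D_def dist_commute)
    thus ?thesis using th_kinks(3)[OF r N] by simp
  qed
  have Xpos: "dist p (X n) > 0" for n
  proof -
    have "r * (1 - stp (n + N1)) > 0" using stp1[of "n + N1"] r by simp
    thus ?thesis using Xdist[of n] by argo
  qed
  have Xlow: "ereal \<beta> \<le> ereal (max (u p - u (X n)) 0 / dist p (X n))" for n
  proof -
    define N where "N = n + N1"
    have N: "N \<ge> N1" "N \<ge> 1" using N1 by (auto simp: N_def)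
    have Nk1: "N + k \<ge> 1" using N by simp
    have c1: "u (X n) + lam * (r * stp (N + k) - r * stp N) \<le> u (j (bb(K := r * stp (N + k))))"
      using chainI[OF N(1), of k] by (simp add: X_def N_def)
    have a: "a0 \<le> r * stp (N + k)" using N1(2) stp_mono[of N1 "N + k"] N r
      by (smt (verit) le_add1 mult_left_mono order_trans)
    have c2: "u (j (bb(K := r * stp (N + k)))) + lam * theta_r r (r * stp (N + k)) r \<le> u p"
      using stepI[OF a, of r] stp1[of "N + k"] r by (simp add: p_def)
    have s: "r * stp (N + k) \<in> {0..r}" using stp_facts[OF Nk1] r stp1[of "N + k"] by simp
    have t0: "theta_r r (r * stp (N + k)) r \<ge> 0" using th_basic(2)[OF r, of "r * stp (N+k)" r] s by simp
    have diff: "stp (N + k) - stp N = (1 - stp N) * (1 - (1/2)^k)"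
      by (simp add: stp_def power_add field_simps)
    have "u p - u (X n) \<ge> lam * (r * stp (N + k) - r * stp N)" using c1 c2 t0 lam0 by (smt (verit) mult_nonneg_nonneg)
    also have "lam * (r * stp (N + k) - r * stp N) = \<beta> * dist p (X n)"
    proof -
      have "lam * (r * stp (N + k) - r * stp N) = lam * r * (stp (N + k) - stp N)" by (simp add: algebra_simps)
      also have "\<dots> = lam * r * ((1 - stp N) * (1 - (1/2)^k))" by (simp only: diff)
      also have "\<dots> = \<beta> * (r * (1 - stp N) / 2)" unfolding \<beta>_def by (simp add: field_simps)
      also have "\<dots> = \<beta> * dist p (X n)" using Xdist[of n] by (simp add: N_def)
      finally show ?thesis .
    qed
    finally have "\<beta> * dist p (X n) \<le> max (u p - u (X n)) 0" by simp
    hence "\<beta> \<le> max (u p - u (X n)) 0 / dist p (X n)" using Xpos[of n] by (simp add: le_divide_eq)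
    thus ?thesis by simp
  qed
  have Xlim: "X \<longlonglongrightarrow> p"
  proof -
    have "(\<lambda>n. stp (n + N1)) \<longlonglongrightarrow> 1" using LIMSEQ_ignore_initial_segment[OF stp_tendsto] .
    hence "(\<lambda>n. r * (1 - stp (n + N1)) / 2) \<longlonglongrightarrow> r * (1 - 1) / 2" by (intro tendsto_intros) auto
    hence lim0: "(\<lambda>n. r * (1 - stp (n + N1)) / 2) \<longlonglongrightarrow> 0" by simp
    have eq: "(\<lambda>n. r * (1 - stp (n + N1)) / 2) = (\<lambda>n. dist (X n) p)"
    proof (rule ext)
      fix n have "dist (X n) p = dist p (X n)" by (rule dist_commute)
      also have "\<dots> = r * (1 - stp (n + N1)) / 2" by (rule Xdist)
      finally show "r * (1 - stp (n + N1)) / 2 = dist (X n) p" by (rule sym)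
    qed
    have "(\<lambda>n. dist (X n) p) \<longlonglongrightarrow> 0" using lim0 unfolding eq .
    thus ?thesis by (rule tendsto_dist_iff[THEN iffD2])
  qed
  have XS: "X n \<in> closure \<Omega>" for n
  proof -
    have "dist p (X n) \<le> r - r * stp (n + N1)"
    proof -
      have "r * (1 - stp (n + N1)) \<ge> 0" using stp1[of "n + N1"] r by simp
      moreover have "r * (1 - stp (n + N1)) = r - r * stp (n + N1)" by (simp add: algebra_simps)
      ultimately show ?thesis using Xdist[of n] by linarith
    qed
    also have "\<dots> \<le> r - a0" using N1(2) stp_mono[of N1 "n + N1"] r by (smt (verit) le_add2 mult_left_mono)
    finally have "X n \<in> ball p d0" using a0 d0 by simp
    hence "X n \<in> \<Omega>" using ballO by blast
    thus ?thesis using closure_subset[of \<Omega>] by blast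
  qed
  have Xne: "X n \<noteq> p" for n using Xpos[of n] by auto
  have nb: "at p within closure \<Omega> \<noteq> bot"
    and lim: "ereal \<beta> \<le> Limsup (at p within closure \<Omega>) (\<lambda>x. ereal (max (u p - u x) 0 / dist p x))"
    using Limsup_seq_lower[where f="\<lambda>x. ereal (max (u p - u x) 0 / dist p x)", OF Xlim XS Xne Xlow] by auto
  have "local_slope (closure \<Omega>) u p = ereal (l p)" using slope pO by (simp add: p_def)
  hence "ereal \<beta> \<le> ereal (l p)" using nb lim by (simp add: local_slope_def)
  thus False using \<beta> by simp
qed

end


theorem proposition4p11:
  fixes P :: "nat \<Rightarrow> (nat \<Rightarrow> real) set"
    and \<rho> :: "nat \<Rightarrow> (nat \<Rightarrow> real) \<Rightarrow> (nat \<Rightarrow> real) \<Rightarrow> real"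
    and L :: "nat \<Rightarrow> (nat \<Rightarrow> real) set"
    and q :: "nat \<Rightarrow> nat \<Rightarrow> (nat \<Rightarrow> real)"
    and j :: "(nat \<Rightarrow> real) \<Rightarrow> 'a::complete_space"
    and \<Omega> :: "'a set"
    and l g :: "'a \<Rightarrow> real"
  assumes "construction P \<rho> L q"
    and "\<forall>k\<ge>1. \<forall>x\<in>P k. \<forall>y\<in>P k. dist (j x) (j y) = \<rho> k x y"
    and "closure (j ` (\<Union>k\<in>{1::nat..}. P k)) = UNIV"
    and "open \<Omega>" and "\<Omega> \<noteq> {}" and "\<Omega> \<noteq> UNIV"
    and "continuous_on \<Omega> l" and "bounded (l ` \<Omega>)" and "(INF x\<in>\<Omega>. l x) > 0"
    and "continuous_on (frontier \<Omega>) g"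
    and "compat_CC \<Omega> l g"
  shows "\<not> (\<exists>u. continuous_on (closure \<Omega>) u \<and>
               (\<forall>x\<in>\<Omega>. local_slope (closure \<Omega>) u x = ereal (l x)) \<and>
               (\<forall>x\<in>frontier \<Omega>. u x = g x))"
  proof
  assume "\<exists>u. continuous_on (closure \<Omega>) u \<and>
               (\<forall>x\<in>\<Omega>. local_slope (closure \<Omega>) u x = ereal (l x)) \<and>
               (\<forall>x\<in>frontier \<Omega>. u x = g x)"
  then obtain u where uc: "continuous_on (closure \<Omega>) u"
    and sl: "\<forall>x\<in>\<Omega>. local_slope (closure \<Omega>) u x = ereal (l x)" by blast
  interpret cstc P \<rho> L q j
    by (unfold_locales) (fact assms)+
  define c where "c = (INF x\<in>\<Omega>. l x)"
  have c0: "c > 0" using assms(9) by (simp add: c_def)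
  have bdd: "bdd_below (l ` \<Omega>)" using assms(8) by (rule bounded_imp_bdd_below)
  have lc: "\<And>x. x \<in> \<Omega> \<Longrightarrow> l x \<ge> c" unfolding c_def using bdd by (rule cINF_lower)
  have "c < 2 * c" using c0 by simp
  then obtain x0 where x0: "x0 \<in> \<Omega>" "l x0 < 2 * c"
    unfolding c_def using cINF_less_iff[OF assms(5) bdd] by (auto simp: c_def)
  obtain e1 where e1: "e1 > 0" "ball x0 e1 \<subseteq> \<Omega>" using assms(4) x0(1) unfolding open_contains_ball by blast
  obtain e2 where e2: "e2 > 0" "\<forall>x'\<in>\<Omega>. dist x' x0 < e2 \<longrightarrow> dist (l x') (l x0) < 2 * c - l x0"
    using assms(7) x0 unfolding continuous_on_iff by (meson diff_gt_0_iff_gt)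
  define e0 where "e0 = min e1 e2"
  have e0: "e0 > 0" using e1 e2 by (simp add: e0_def)
  have good: "z \<in> \<Omega> \<and> l z < 2 * c" if "dist z x0 < e0" for z
  proof -
    have zO: "z \<in> \<Omega>" using that e1 by (auto simp: e0_def dist_commute)
    moreover have "dist (l z) (l x0) < 2 * c - l x0" using e2 zO that by (simp add: e0_def)
    ultimately show ?thesis by (simp add: dist_real_def)
  qed
  have e02: "e0 / 2 > 0" using e0 by simp
  obtain v where v: "v \<in> PP" "dist (j v) x0 < e0 / 2" using approx[OF e02] by blast
  obtain M where M: "M \<ge> 1" "v \<in> P M" using v(1) by (auto simp: PP_def)
  obtain K bb r where sp: "spike K bb r" and Dv: "D v (bb(K:=r)) < e0 / 2"
    using tip_exists[OF M e02] by blast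
  have "dist (j (bb(K:=r))) x0 \<le> dist (j (bb(K:=r))) (j v) + dist (j v) x0" by (rule dist_triangle)
  also have "dist (j (bb(K:=r))) (j v) = D v (bb(K:=r))" by (simp add: D_def dist_commute)
  finally have "dist (j (bb(K:=r))) x0 < e0" using Dv v(2) by linarith
  hence pg: "j (bb(K:=r)) \<in> \<Omega> \<and> l (j (bb(K:=r))) < 2 * c" by (rule good)
  show False using tip_contra[OF sp assms(4) conjunct1[OF pg] c0 lc conjunct2[OF pg] uc sl] .
qed


end
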